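(* Let $\gamma:S^1\to\mathbb R^3$ be a smooth immersed closed curve and consider: $(\Gamma_1)$ each vertical plane meets $\gamma$ in at most two points (i.e. $|P\cap\gamma|\le2$); $(\Gamma_1')$ $P_{xy}|_\gamma$ is injective and $\bar\gamma=P_{xy}\circ\gamma$ is strictly convex; $(\Gamma_2)$ $\gamma$ satisfies a three-point condition with some constant $\Delta$; $(\Gamma_3)$ the slopes of all secant lines of $\gamma$ are bounded by some constant $\Delta$; $(\Gamma_4)$ the slopes of all tangent lines of $\gamma$ are bounded by some constant $\Delta$; $(\Gamma_4')$ $\gamma$ has no vertical tangent lines; $(\Gamma_5)$ the curvature $k$ of $\gamma$ is positive and the slopes of all osculating planes are bounded by some constant $\Delta$. Then: (a) $(\Gamma_1)\Leftrightarrow(\Gamma_1')$ and $(\Gamma_4)\Leftrightarrow(\Gamma_4')$; (b) $(\Gamma_2)\Rightarrow(\Gamma_3)\Rightarrow(\Gamma_4)$ with the same constant $\Delta$; (c) if $(\Gamma_1)$ holds, then $(\Gamma_4)\Rightarrow(\Gamma_3)$ (with possibly different $\Delta$); (d) if $(\Gamma_1)$ and $(\Gamma_5)$ hold, then $(\Gamma_3)\Rightarrow(\Gamma_2)$ (with possibly different $\Delta$).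
   Context: $P_{xy}$ projects $\mathbb R^3$ onto the $xy$-plane; vertical means perpendicular to the $xy$-plane. An immersed planar curve is strictly convex if it meets every line in at most two points. The slope $S_L$ of a line $L$ is $\tan\Theta$ with $\Theta\in[0,\pi/2]$ the angle between $L$ and the $xy$-plane; the slope $S_P$ of a plane is $\tan$ of its dihedral angle with the $xy$-plane; vertical lines/planes have slope $+\infty$. A secant line of $\gamma$ is a line meeting $\gamma$ in at least two distinct points. For $k>0$, the osculating plane at $\gamma(u)$ is the plane through $\gamma(u)$ spanned by the unit tangent $T(u)$ and unit normal $N(u)$. $|P\cap\gamma|:=\#\{u\in S^1:\gamma(u)\in P\}$. $\gamma$ satisfies a three-point condition with constant $\Delta\in[0,\infty)$ if $S_P\le\Delta$ for every plane $P$ with $|P\cap\gamma|\ge3$. *)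

theory Defs
  imports "HOL-Analysis.Analysis"
begin

text \<open>Curves gamma : S^1 -> R^3 are represented as 1-periodic maps real => real^3;
  S^1 is parametrised by the parameters u in {0..<1}.\<close>

fun vderiv_iter :: "nat \<Rightarrow> (real \<Rightarrow> real^3) \<Rightarrow> real \<Rightarrow> real^3" where
  "vderiv_iter 0 f = f"
| "vderiv_iter (Suc n) f = (\<lambda>t. vector_derivative (vderiv_iter n f) (at t))"

definition smooth_map :: "(real \<Rightarrow> real^3) \<Rightarrow> bool" where
  "smooth_map f \<longleftrightarrow> (\<forall>n t. vderiv_iter n f differentiable (at t))"

definition smooth_immersed_closed_curve :: "(real \<Rightarrow> real^3) \<Rightarrow> bool" where
  "smooth_immersed_closed_curve \<gamma> \<longleftrightarrow>
     smooth_map \<gamma> \<and> (\<forall>t. \<gamma> (t + 1) = \<gamma> t) \<and>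
     (\<forall>t. vector_derivative \<gamma> (at t) \<noteq> 0)"

definition hits :: "(real \<Rightarrow> 'a) \<Rightarrow> 'a set \<Rightarrow> real set" where
  "hits \<gamma> P = {u \<in> {0..<1}. \<gamma> u \<in> P}"

definition npts :: "(real \<Rightarrow> 'a) \<Rightarrow> 'a set \<Rightarrow> enat" where
  "npts \<gamma> P = (if finite (hits \<gamma> P) then enat (card (hits \<gamma> P)) else \<infinity>)"

definition plane :: "real^3 \<Rightarrow> real \<Rightarrow> (real^3) set" where
  "plane n c = {p. n \<bullet> p = c}"

text \<open>A plane is vertical iff its normal is horizontal.\<close>
definition vertical_normal :: "real^3 \<Rightarrow> bool" where
  "vertical_normal n \<longleftrightarrow> n \<noteq> 0 \<and> n $ 3 = 0"

text \<open>Slope of the plane with normal n: tan of the dihedral angle with the xy-plane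
  (the angle between n and the vertical axis); +infinity for vertical planes.\<close>
definition plane_slope :: "real^3 \<Rightarrow> ereal" where
  "plane_slope n = (if n $ 3 = 0 then \<infinity>
      else ereal (sqrt ((n $ 1)^2 + (n $ 2)^2) / \<bar>n $ 3\<bar>))"

text \<open>Slope of a line with direction v \<noteq> 0: tan of its angle with the xy-plane;
  +infinity for vertical lines.\<close>
definition line_slope :: "real^3 \<Rightarrow> ereal" where
  "line_slope v = (if v $ 1 = 0 \<and> v $ 2 = 0 then \<infinity>
      else ereal (\<bar>v $ 3\<bar> / sqrt ((v $ 1)^2 + (v $ 2)^2)))"

definition Pxy :: "real^3 \<Rightarrow> real^2" where
  "Pxy p = vector [p $ 1, p $ 2]"

text \<open>An immersed planar curve is strictly convex iff it meets every line in at most two points.\<close>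
definition strictly_convex_planar :: "(real \<Rightarrow> real^2) \<Rightarrow> bool" where
  "strictly_convex_planar \<beta> \<longleftrightarrow>
     (\<forall>a c. a \<noteq> 0 \<longrightarrow> npts \<beta> {q. a \<bullet> q = c} \<le> 2)"

definition unit_tangent :: "(real \<Rightarrow> real^3) \<Rightarrow> real \<Rightarrow> real^3" where
  "unit_tangent \<gamma> u = vector_derivative \<gamma> (at u) /\<^sub>R norm (vector_derivative \<gamma> (at u))"

text \<open>Curvature k = |dT/ds|, with ds = |gamma'| du.\<close>
definition curvature :: "(real \<Rightarrow> real^3) \<Rightarrow> real \<Rightarrow> real" where
  "curvature \<gamma> u = norm (vector_derivative (unit_tangent \<gamma>) (at u))
                      / norm (vector_derivative \<gamma> (at u))"

definition unit_normal :: "(real \<Rightarrow> real^3) \<Rightarrow> real \<Rightarrow> real^3" where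
  "unit_normal \<gamma> u = vector_derivative (unit_tangent \<gamma>) (at u)
                      /\<^sub>R norm (vector_derivative (unit_tangent \<gamma>) (at u))"

text \<open>Osculating plane at gamma(u): through gamma(u), spanned by T(u), N(u);
  its normal is T(u) x N(u).\<close>
definition osculating_normal :: "(real \<Rightarrow> real^3) \<Rightarrow> real \<Rightarrow> real^3" where
  "osculating_normal \<gamma> u = cross3 (unit_tangent \<gamma> u) (unit_normal \<gamma> u)"

definition Gamma1 :: "(real \<Rightarrow> real^3) \<Rightarrow> bool" where
  "Gamma1 \<gamma> \<longleftrightarrow> (\<forall>n c. vertical_normal n \<longrightarrow> npts \<gamma> (plane n c) \<le> 2)"

definition Gamma1' :: "(real \<Rightarrow> real^3) \<Rightarrow> bool" where
  "Gamma1' \<gamma> \<longleftrightarrow> inj_on (Pxy \<circ> \<gamma>) {0..<1} \<and> strictly_convex_planar (Pxy \<circ> \<gamma>)"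

definition Gamma2 :: "(real \<Rightarrow> real^3) \<Rightarrow> real \<Rightarrow> bool" where
  "Gamma2 \<gamma> \<Delta> \<longleftrightarrow> (\<forall>n c. n \<noteq> 0 \<longrightarrow> npts \<gamma> (plane n c) \<ge> 3 \<longrightarrow> plane_slope n \<le> ereal \<Delta>)"

definition Gamma3 :: "(real \<Rightarrow> real^3) \<Rightarrow> real \<Rightarrow> bool" where
  "Gamma3 \<gamma> \<Delta> \<longleftrightarrow> (\<forall>u v. \<gamma> u \<noteq> \<gamma> v \<longrightarrow> line_slope (\<gamma> u - \<gamma> v) \<le> ereal \<Delta>)"

definition Gamma4 :: "(real \<Rightarrow> real^3) \<Rightarrow> real \<Rightarrow> bool" where
  "Gamma4 \<gamma> \<Delta> \<longleftrightarrow> (\<forall>u. line_slope (vector_derivative \<gamma> (at u)) \<le> ereal \<Delta>)"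

definition Gamma4' :: "(real \<Rightarrow> real^3) \<Rightarrow> bool" where
  "Gamma4' \<gamma> \<longleftrightarrow> (\<forall>u. line_slope (vector_derivative \<gamma> (at u)) \<noteq> \<infinity>)"

definition Gamma5 :: "(real \<Rightarrow> real^3) \<Rightarrow> real \<Rightarrow> bool" where
  "Gamma5 \<gamma> \<Delta> \<longleftrightarrow> (\<forall>u. curvature \<gamma> u > 0) \<and>
     (\<forall>u. plane_slope (osculating_normal \<gamma> u) \<le> ereal \<Delta>)"

end

theory Submission
  imports Defs
begin

locale curve =
  fixes \<gamma> :: "real \<Rightarrow> real^3"
  assumes sicc: "smooth_immersed_closed_curve \<gamma>"
begin

definition g1 where "g1 t = vector_derivative \<gamma> (at t)"
definition g2 where "g2 t = vector_derivative g1 (at t)"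

lemma per: "\<gamma> (t + 1) = \<gamma> t"
  using sicc by (simp add: smooth_immersed_closed_curve_def)

lemma imm: "g1 t \<noteq> 0"
  using sicc by (simp add: smooth_immersed_closed_curve_def g1_def)

lemma d1: "(\<gamma> has_vector_derivative g1 t) (at t)"
proof -
  have "vderiv_iter 0 \<gamma> differentiable (at t)"
    using sicc unfolding smooth_immersed_closed_curve_def smooth_map_def by blast
  then show ?thesis by (simp add: g1_def vector_derivative_works)
qed

lemma d2: "(g1 has_vector_derivative g2 t) (at t)"
proof -
  have "vderiv_iter 1 \<gamma> differentiable (at t)"
    using sicc unfolding smooth_immersed_closed_curve_def smooth_map_def by blast
  then have "g1 differentiable (at t)" by (simp add: g1_def[abs_def])
  then show ?thesis by (simp add: g2_def vector_derivative_works)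
qed

lemma d3: "g2 differentiable (at t)"
proof -
  have "vderiv_iter 2 \<gamma> differentiable (at t)"
    using sicc unfolding smooth_immersed_closed_curve_def smooth_map_def by blast
  then show ?thesis by (simp add: g1_def[abs_def] g2_def[abs_def] numeral_2_eq_2)
qed

lemma cont0: "isCont \<gamma> t"
  using d1 by (meson has_vector_derivative_continuous)
lemma cont1: "isCont g1 t"
  using d2 by (meson has_vector_derivative_continuous)
lemma cont2: "isCont g2 t"
  using d3 by (simp add: differentiable_imp_continuous_within)

lemma contOn0: "continuous_on S \<gamma>" using cont0 by (simp add: continuous_at_imp_continuous_on)
lemma contOn1: "continuous_on S g1" using cont1 by (simp add: continuous_at_imp_continuous_on)
lemma contOn2: "continuous_on S g2" using cont2 by (simp add: continuous_at_imp_continuous_on)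

lemma per_nat: "\<gamma> (t + real n) = \<gamma> t"
proof (induction n)
  case (Suc n)
  have "\<gamma> (t + real (Suc n)) = \<gamma> ((t + real n) + 1)" by (simp add: algebra_simps)
  also have "\<dots> = \<gamma> t" using per Suc by simp
  finally show ?case .
qed simp

lemma per_int: "\<gamma> (t + real_of_int k) = \<gamma> t"
proof (cases "k \<ge> 0")
  case True
  then show ?thesis using per_nat[of t "nat k"] by simp
next
  case False
  then show ?thesis using per_nat[of "t + real_of_int k" "nat (-k)"] False by simp
qed

lemma per_Ints: "d \<in> \<int> \<Longrightarrow> \<gamma> (t + d) = \<gamma> t"
  by (metis Ints_cases per_int)

lemma per_frac: "\<gamma> (frac t) = \<gamma> t"
  using per_int[of "frac t" "\<lfloor>t\<rfloor>"] by (simp add: frac_def)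

lemma g1_per: "g1 (t + 1) = g1 t"
proof -
  have "((\<gamma> \<circ> (\<lambda>x. x + 1)) has_vector_derivative (1 *\<^sub>R g1 (t+1))) (at t)"
  proof (rule vector_diff_chain_at)
    show "((\<lambda>x. x + 1) has_vector_derivative 1) (at t)"
      by (rule derivative_eq_intros refl)+ simp
    show "(\<gamma> has_vector_derivative g1 (t + 1)) (at (t + 1))" by (rule d1)
  qed
  moreover have "\<gamma> \<circ> (\<lambda>x. x + 1) = \<gamma>" by (auto simp: per)
  ultimately have "(\<gamma> has_vector_derivative g1 (t + 1)) (at t)" by simp
  from vector_derivative_unique_at[OF d1 this] show ?thesis by simp
qed

lemma g1_per_nat: "g1 (t + real n) = g1 t"
proof (induction n)
  case (Suc n)
  have "g1 (t + real (Suc n)) = g1 ((t + real n) + 1)" by (simp add: algebra_simps)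
  also have "\<dots> = g1 t" using g1_per Suc by simp
  finally show ?case .
qed simp

lemma g1_frac: "g1 (frac t) = g1 t"
proof (cases "\<lfloor>t\<rfloor> \<ge> 0")
  case True
  then show ?thesis using g1_per_nat[of "frac t" "nat \<lfloor>t\<rfloor>"] by (simp add: frac_def)
next
  case False
  then show ?thesis using g1_per_nat[of t "nat (- \<lfloor>t\<rfloor>)"] by (simp add: frac_def)
qed

end

definition xyn :: "real^3 \<Rightarrow> real" where "xyn v = sqrt ((v$1)^2 + (v$2)^2)"

lemma xyn_ge0: "xyn v \<ge> 0" by (simp add: xyn_def)

lemma xyn_eq0: "xyn v = 0 \<longleftrightarrow> v$1 = 0 \<and> v$2 = 0"
  by (simp add: xyn_def add_nonneg_eq_0_iff)

lemma inner3: "(a::real^3) \<bullet> b = a$1*b$1 + a$2*b$2 + a$3*b$3"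
  by (simp add: inner_vec_def sum_3)

lemma inner2: "(a::real^2) \<bullet> b = a$1*b$1 + a$2*b$2"
  by (simp add: inner_vec_def sum_2)

lemma line_slope_le: "line_slope v \<le> ereal \<Delta> \<longleftrightarrow> xyn v \<noteq> 0 \<and> \<bar>v$3\<bar> \<le> \<Delta> * xyn v"
proof (cases "v$1 = 0 \<and> v$2 = 0")
  case True then show ?thesis by (simp add: line_slope_def xyn_eq0)
next
  case False
  then have p: "xyn v > 0" using xyn_ge0[of v] xyn_eq0[of v] by linarith
  then show ?thesis using False
    by (auto simp: line_slope_def xyn_def[symmetric] pos_divide_le_eq)
qed

lemma plane_slope_le: "plane_slope n \<le> ereal \<Delta> \<longleftrightarrow> n$3 \<noteq> 0 \<and> xyn n \<le> \<Delta> * \<bar>n$3\<bar>"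
proof (cases "n$3 = 0")
  case True then show ?thesis by (simp add: plane_slope_def)
next
  case False
  then show ?thesis
    by (simp add: plane_slope_def xyn_def[symmetric] pos_divide_le_eq)
qed

lemma npts3:
  assumes "a \<in> hits g P" "b \<in> hits g P" "c \<in> hits g P" "a \<noteq> b" "a \<noteq> c" "b \<noteq> c"
  shows "npts g P \<ge> 3"
proof (cases "finite (hits g P)")
  case True
  have "card {a,b,c} \<le> card (hits g P)" using assms True by (intro card_mono) auto
  moreover have "card {a,b,c} = 3" using assms by auto
  ultimately show ?thesis using True by (simp add: npts_def numeral_eq_enat)
next
  case False then show ?thesis by (simp add: npts_def)
qed

lemma npts_le2_False:
  assumes "npts g P \<le> 2" "a \<in> hits g P" "b \<in> hits g P" "c \<in> hits g P" "a \<noteq> b" "a \<noteq> c" "b \<noteq> c"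
  shows False
proof -
  have "npts g P \<ge> 3" using npts3 assms(2-) by blast
  with assms(1) have "(3::enat) \<le> 2" by (rule order.trans[rotated])
  then show False by (simp add: numeral_eq_enat)
qed

lemma notInts: "0 < r \<Longrightarrow> r < 1 \<Longrightarrow> (r::real) \<notin> \<int>"
  by (auto elim!: Ints_cases)

lemma frac_eq_Ints: "frac x = frac y \<Longrightarrow> x - y \<in> (\<int>::real set)"
proof -
  assume "frac x = frac y"
  then have "x - y = of_int (\<lfloor>x\<rfloor> - \<lfloor>y\<rfloor>)" by (simp add: frac_def algebra_simps)
  then show ?thesis by simp
qed

context curve begin

lemma hits_frac: "n \<bullet> \<gamma> x = c \<Longrightarrow> frac x \<in> hits \<gamma> (plane n c)"
  by (simp add: hits_def plane_def per_frac frac_lt_1)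

lemma three_pt:
  assumes G1: "Gamma1 \<gamma>" and n: "n$3 = 0" "n \<noteq> 0"
    and h: "n \<bullet> \<gamma> x = c" "n \<bullet> \<gamma> y = c" "n \<bullet> \<gamma> z = c"
    and d: "x - y \<notin> \<int>" "x - z \<notin> \<int>" "y - z \<notin> \<int>"
  shows False
proof -
  have "npts \<gamma> (plane n c) \<le> 2" using G1 n by (simp add: Gamma1_def vertical_normal_def)
  moreover have "frac x \<noteq> frac y" "frac x \<noteq> frac z" "frac y \<noteq> frac z"
    using d frac_eq_Ints by blast+
  ultimately show False using npts_le2_False hits_frac h by metis
qed

lemma proj_inj:
  assumes G1: "Gamma1 \<gamma>" and d: "x - y \<notin> \<int>"
  shows "\<gamma> x $ 1 \<noteq> \<gamma> y $ 1 \<or> \<gamma> x $ 2 \<noteq> \<gamma> y $ 2"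
proof (rule ccontr)
  assume eq: "\<not> ?thesis"
  obtain w where w1: "w - x \<notin> \<int>" and w2: "y - w \<notin> \<int>"
  proof (cases "y - (x + 1/3) \<in> \<int>")
    case True
    have "y - (x + 2/3) \<notin> \<int>"
    proof
      assume "y - (x + 2/3) \<in> \<int>"
      with True have "(y - (x + 1/3)) - (y - (x + 2/3)) \<in> \<int>" by (rule Ints_diff)
      then show False using notInts[of "1/3"] by simp
    qed
    then show ?thesis using that[of "x + 2/3"] notInts[of "2/3"] by simp
  next
    case False
    then show ?thesis using that[of "x + 1/3"] notInts[of "1/3"] by simp
  qed
  define d where "d = \<gamma> w - \<gamma> x"
  define n :: "real^3" where "n = (if d$1 = 0 \<and> d$2 = 0 then vector [1,0,0] else vector [- d$2, d$1, 0])"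
  have n3: "n$3 = 0" and nn: "n \<noteq> 0"
    by (auto simp: n_def vec_eq_iff forall_3)
  have "n \<bullet> \<gamma> y = n \<bullet> \<gamma> x" using eq n3 by (simp add: inner3)
  moreover have "n \<bullet> \<gamma> w = n \<bullet> \<gamma> x"
  proof -
    have "n \<bullet> d = 0" by (auto simp: n_def inner3)
    then show ?thesis by (simp add: d_def inner_diff_right)
  qed
  moreover have "x - w \<notin> \<int>" using w1 by (metis Ints_minus minus_diff_eq)
  ultimately show False
    using three_pt[OF G1 n3 nn, of x "n \<bullet> \<gamma> x" y w] d w2 by auto
qed

lemma G1_iff: "Gamma1 \<gamma> \<longleftrightarrow> Gamma1' \<gamma>"
proof
  assume G1: "Gamma1 \<gamma>"
  have inj: "inj_on (Pxy \<circ> \<gamma>) {0..<1}"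
  proof (rule inj_onI)
    fix u v assume u: "u \<in> {0..<1}" and v: "v \<in> {0..<1}" and e: "(Pxy \<circ> \<gamma>) u = (Pxy \<circ> \<gamma>) v"
    show "u = v"
    proof (rule ccontr)
      assume "u \<noteq> v"
      then have "u - v \<notin> \<int>"
        using u v notInts[of "u - v"] notInts[of "v - u"]
        by (cases "u < v") (auto, metis Ints_minus minus_diff_eq)
      from proj_inj[OF G1 this] e show False
        by (auto simp: Pxy_def vec_eq_iff forall_2)
    qed
  qed
  have sc: "strictly_convex_planar (Pxy \<circ> \<gamma>)"
    unfolding strictly_convex_planar_def
  proof (intro allI impI)
    fix a :: "real^2" and c assume a: "a \<noteq> 0"
    define n :: "real^3" where "n = vector [a$1, a$2, 0]"
    have n123: "n$1 = a$1" "n$2 = a$2" "n$3 = 0" by (simp_all add: n_def)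
    have "n \<noteq> 0"
    proof
      assume "n = 0"
      then have "a$1 = 0" "a$2 = 0" using n123 by auto
      then show False using a by (auto simp: vec_eq_iff forall_2)
    qed
    then have vn: "vertical_normal n" using n123 by (simp add: vertical_normal_def)
    have "hits (Pxy \<circ> \<gamma>) {q. a \<bullet> q = c} = hits \<gamma> (plane n c)"
      by (auto simp: hits_def plane_def n_def inner2 inner3 Pxy_def)
    then have "npts (Pxy \<circ> \<gamma>) {q. a \<bullet> q = c} = npts \<gamma> (plane n c)"
      by (simp add: npts_def)
    moreover have "npts \<gamma> (plane n c) \<le> 2" using G1 vn by (simp add: Gamma1_def)
    ultimately show "npts (Pxy \<circ> \<gamma>) {q. a \<bullet> q = c} \<le> 2" by simp
  qed
  show "Gamma1' \<gamma>" using inj sc by (simp add: Gamma1'_def)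
next
  assume G1': "Gamma1' \<gamma>"
  show "Gamma1 \<gamma>" unfolding Gamma1_def
  proof (intro allI impI)
    fix n c assume vn: "vertical_normal n"
    define a :: "real^2" where "a = vector [n$1, n$2]"
    have a: "a \<noteq> 0" using vn by (auto simp: a_def vertical_normal_def vec_eq_iff forall_2 forall_3)
    have "hits (Pxy \<circ> \<gamma>) {q. a \<bullet> q = c} = hits \<gamma> (plane n c)"
      using vn by (auto simp: hits_def plane_def a_def inner2 inner3 Pxy_def vertical_normal_def)
    then show "npts \<gamma> (plane n c) \<le> 2"
      using G1' a by (metis Gamma1'_def strictly_convex_planar_def npts_def)
  qed
qed

end

lemma CS2: "\<bar>a*c + b*e\<bar> \<le> sqrt (a^2+b^2) * sqrt (c^2+e^2)" for a b c e :: real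
proof -
  have eq: "(a^2+b^2)*(c^2+e^2) = (a*c+b*e)^2 + (a*e-b*c)^2" by (simp add: power2_eq_square algebra_simps)
  have "\<bar>a*c + b*e\<bar> = sqrt ((a*c+b*e)^2)" by simp
  also have "\<dots> \<le> sqrt ((a^2+b^2)*(c^2+e^2))" unfolding eq by (rule real_sqrt_le_mono) simp
  also have "\<dots> = sqrt (a^2+b^2) * sqrt (c^2+e^2)" by (simp add: real_sqrt_mult)
  finally show ?thesis .
qed

lemma xyn_pair: "xyn v = norm (v$1, v$2)"
  by (simp add: xyn_def norm_Pair)

lemma xyn_add: "xyn (a + b) \<le> xyn a + xyn b"
proof -
  have "(((a+b)$1, (a+b)$2)::real*real) = (a$1,a$2) + (b$1,b$2)" by simp
  then show ?thesis unfolding xyn_pair by (metis norm_triangle_ineq)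
qed

lemma xyn_diff: "xyn (a - b) \<le> xyn a + xyn b"
proof -
  have "xyn (-b) = xyn b" by (simp add: xyn_def)
  then show ?thesis using xyn_add[of a "-b"] by simp
qed

lemma xyn_scale: "xyn (c *\<^sub>R a) = \<bar>c\<bar> * xyn a"
proof -
  have "((c*a$1)^2 + (c*a$2)^2) = c^2 * ((a$1)^2+(a$2)^2)" by (simp add: power2_eq_square algebra_simps)
  then show ?thesis by (simp add: xyn_def real_sqrt_mult)
qed

lemma norm3: "norm (v::real^3) = sqrt ((v$1)^2 + (v$2)^2 + (v$3)^2)"
  by (simp add: norm_eq_sqrt_inner inner3 power2_eq_square)

lemma xyn_le_norm: "xyn v \<le> norm v"
  unfolding xyn_def norm3 by (rule real_sqrt_le_mono) simp

lemma c3_le_norm: "\<bar>v$3\<bar> \<le> norm (v::real^3)"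
  by (rule component_le_norm_cart)

lemma plane_to_line:
  assumes nd: "n \<bullet> d = 0" and d: "d \<noteq> 0" and n3: "n$3 \<noteq> 0" and sl: "xyn n \<le> \<Delta> * \<bar>n$3\<bar>"
  shows "xyn d \<noteq> 0 \<and> \<bar>d$3\<bar> \<le> \<Delta> * xyn d"
proof -
  have e: "d$3 * n$3 = - (n$1*d$1 + n$2*d$2)" using nd by (simp add: inner3 algebra_simps)
  have "\<bar>d$3\<bar> * \<bar>n$3\<bar> \<le> xyn n * xyn d"
    using CS2[of "n$1" "d$1" "n$2" "d$2"] e by (simp add: xyn_def abs_mult[symmetric])
  also have "\<dots> \<le> \<Delta> * \<bar>n$3\<bar> * xyn d" using sl xyn_ge0[of d] by (rule mult_right_mono)
  finally have "\<bar>d$3\<bar> * \<bar>n$3\<bar> \<le> (\<Delta> * xyn d) * \<bar>n$3\<bar>" by (simp add: algebra_simps)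
  then have le: "\<bar>d$3\<bar> \<le> \<Delta> * xyn d" using n3 by simp
  have "xyn d \<noteq> 0"
  proof
    assume "xyn d = 0"
    then have "d$1 = 0" "d$2 = 0" "d$3 = 0" using le xyn_eq0[of d] by auto
    then show False using d by (auto simp: vec_eq_iff forall_3)
  qed
  then show ?thesis using le by simp
qed

context curve begin

lemma G2_G3: assumes "Gamma2 \<gamma> \<Delta>" shows "Gamma3 \<gamma> \<Delta>"
  unfolding Gamma3_def
proof (intro allI impI)
  fix u v assume ne: "\<gamma> u \<noteq> \<gamma> v"
  define a where "a = frac u"
  define b where "b = frac v"
  have ab: "a \<noteq> b"
  proof
    assume "a = b"
    then have "u - v \<in> \<int>" using frac_eq_Ints a_def b_def by blast
    then have "\<gamma> (v + (u - v)) = \<gamma> v" by (rule per_Ints)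
    then show False using ne by simp
  qed
  obtain w where w: "w \<in> {0..<1}" "w \<noteq> a" "w \<noteq> b"
  proof (cases "0 \<noteq> a \<and> 0 \<noteq> b")
    case True then show ?thesis using that[of 0] by auto
  next
    case F1: False
    show ?thesis
    proof (cases "1/3 \<noteq> a \<and> 1/3 \<noteq> b")
      case True then show ?thesis using that[of "1/3"] by auto
    next
      case False
      then have "2/3 \<noteq> a \<and> 2/3 \<noteq> b" using F1 by auto
      then show ?thesis using that[of "2/3"] by auto
    qed
  qed
  define d where "d = \<gamma> u - \<gamma> v"
  define e where "e = \<gamma> w - \<gamma> v"
  define e1 :: "real^3" where "e1 = vector [1,0,0]"
  define e2 :: "real^3" where "e2 = vector [0,1,0]"
  define n where "n = (if cross3 d e \<noteq> 0 then cross3 d e else if cross3 d e1 \<noteq> 0 then cross3 d e1 else cross3 d e2)"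
  have d0: "d \<noteq> 0" using ne by (simp add: d_def)
  have nn: "n \<noteq> 0"
  proof -
    have "cross3 d e1 \<noteq> 0 \<or> cross3 d e2 \<noteq> 0"
    proof (rule ccontr)
      assume "\<not> ?thesis"
      then have "(cross3 d e1)$2 = 0" "(cross3 d e1)$3 = 0" "(cross3 d e2)$3 = 0" by auto
      then have "d$1 = 0" "d$2 = 0" "d$3 = 0" by (simp_all add: cross_components e1_def e2_def)
      then show False using d0 by (auto simp: vec_eq_iff forall_3)
    qed
    then show ?thesis by (auto simp: n_def)
  qed
  have trip: "(cross3 d f) \<bullet> e = 0" if "cross3 d e = 0" for f
  proof -
    have "(cross3 d f) \<bullet> e = (cross3 f e) \<bullet> d" by (rule cross_triple)
    also have "\<dots> = (cross3 e d) \<bullet> f" by (rule cross_triple)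
    also have "cross3 e d = 0" using that cross_skew[of e d] by simp
    finally show ?thesis by simp
  qed
  have nd: "n \<bullet> d = 0" by (auto simp: n_def dot_cross_self)
  have ne': "n \<bullet> e = 0" by (auto simp: n_def dot_cross_self trip)
  define c where "c = n \<bullet> \<gamma> v"
  have hu: "n \<bullet> \<gamma> u = c" using nd by (simp add: c_def d_def inner_diff_right)
  have hw: "n \<bullet> \<gamma> w = c" using ne' by (simp add: c_def e_def inner_diff_right)
  have ha: "a \<in> hits \<gamma> (plane n c)" using hits_frac[OF hu] a_def by simp
  have hb: "b \<in> hits \<gamma> (plane n c)" using hits_frac[of n v c] c_def b_def by simp
  have hw': "w \<in> hits \<gamma> (plane n c)" using w hw by (simp add: hits_def plane_def)
  have "npts \<gamma> (plane n c) \<ge> 3" by (rule npts3[OF ha hb hw' ab]) (use w in auto)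
  then have "plane_slope n \<le> ereal \<Delta>" using assms nn unfolding Gamma2_def by blast
  then have "n$3 \<noteq> 0 \<and> xyn n \<le> \<Delta> * \<bar>n$3\<bar>" by (simp add: plane_slope_le)
  then have "xyn d \<noteq> 0 \<and> \<bar>d$3\<bar> \<le> \<Delta> * xyn d" using plane_to_line nd d0 by blast
  then show "line_slope (\<gamma> u - \<gamma> v) \<le> ereal \<Delta>" by (simp add: line_slope_le d_def)
qed

lemma linearize:
  assumes "e > 0"
  shows "\<exists>\<delta>>0. \<forall>h. \<bar>h\<bar> < \<delta> \<longrightarrow> norm (\<gamma> (u + h) - \<gamma> u - h *\<^sub>R g1 u) \<le> \<bar>h\<bar> * e"
proof -
  have "\<forall>e>0. \<exists>d>0. \<forall>x. dist x u < d \<longrightarrow> dist (g1 x) (g1 u) < e"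
    using cont1[of u] by (simp add: continuous_at_eps_delta)
  then obtain \<delta> where \<delta>: "\<delta> > 0" "\<And>x. dist x u < \<delta> \<Longrightarrow> dist (g1 x) (g1 u) < e"
    using assms by blast
  show ?thesis
  proof (intro exI[of _ \<delta>] conjI allI impI)
    fix h :: real assume h: "\<bar>h\<bar> < \<delta>"
    have "norm (\<gamma> (u + h) - \<gamma> u - ((u + h) - u) *\<^sub>R g1 u) \<le> norm ((u + h) - u) * e"
    proof (rule vector_differentiable_bound_linearization[where S="ball u \<delta>"])
      show "\<And>x. x \<in> ball u \<delta> \<Longrightarrow> (\<gamma> has_vector_derivative g1 x) (at x within ball u \<delta>)"
        using d1 has_vector_derivative_at_within by blast
      show "closed_segment u (u + h) \<subseteq> ball u \<delta>"
        using h \<delta>(1) by (intro closed_segment_subset) (auto simp: dist_real_def)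
      show "\<And>x. x \<in> ball u \<delta> \<Longrightarrow> norm (g1 x - g1 u) \<le> e"
        using \<delta>(2) by (auto simp: dist_norm dist_commute less_imp_le)
      show "u \<in> ball u \<delta>" using \<delta> by simp
    qed
    then show "norm (\<gamma> (u + h) - \<gamma> u - h *\<^sub>R g1 u) \<le> \<bar>h\<bar> * e" by simp
  qed (use \<delta> in simp)
qed

lemma G3_G4: assumes G3: "Gamma3 \<gamma> \<Delta>" and D: "\<Delta> \<ge> 0" shows "Gamma4 \<gamma> \<Delta>"
  unfolding Gamma4_def
proof
  fix u
  have sec: "\<bar>(\<gamma> (u+h) - \<gamma> u)$3\<bar> \<le> \<Delta> * xyn (\<gamma> (u+h) - \<gamma> u)" for h
  proof (cases "\<gamma> (u+h) = \<gamma> u")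
    case True then show ?thesis by (simp add: xyn_def)
  next
    case False then show ?thesis using G3 by (simp add: Gamma3_def line_slope_le)
  qed
  have main: "\<bar>g1 u $3\<bar> \<le> \<Delta> * xyn (g1 u) + e" if e: "e > 0" for e
  proof -
    define e' where "e' = e / (\<Delta> + 1)"
    have e': "e' > 0" using e D by (simp add: e'_def)
    obtain \<delta> where \<delta>: "\<delta> > 0" "\<And>h. \<bar>h\<bar> < \<delta> \<Longrightarrow> norm (\<gamma> (u + h) - \<gamma> u - h *\<^sub>R g1 u) \<le> \<bar>h\<bar> * e'"
      using linearize[OF e'] by blast
    define h where "h = \<delta>/2"
    have h: "h > 0" "\<bar>h\<bar> < \<delta>" using \<delta> by (auto simp: h_def)
    define d where "d = \<gamma> (u + h) - \<gamma> u"
    define r where "r = d - h *\<^sub>R g1 u"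
    have r: "norm r \<le> h * e'" using \<delta>(2)[OF h(2)] h by (simp add: r_def d_def)
    have hg: "h *\<^sub>R g1 u = d - r" by (simp add: r_def)
    have "(h *\<^sub>R g1 u)$3 = (d - r)$3" using hg by simp
    then have "\<bar>h * g1 u $3\<bar> = \<bar>(d - r)$3\<bar>" by simp
    moreover have "\<bar>h * g1 u $3\<bar> = h * \<bar>g1 u $3\<bar>" using h by (simp add: abs_mult)
    ultimately have "h * \<bar>g1 u $3\<bar> = \<bar>(d - r)$3\<bar>" by simp
    also have "\<dots> \<le> \<bar>d$3\<bar> + \<bar>r$3\<bar>" by simp
    also have "\<dots> \<le> \<Delta> * xyn d + norm r" using sec[of h] c3_le_norm[of r] by (simp add: d_def)
    also have "xyn d \<le> xyn (h *\<^sub>R g1 u) + xyn r" using xyn_add[of "h *\<^sub>R g1 u" r] by (simp add: r_def)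
    also have "xyn r \<le> norm r" by (rule xyn_le_norm)
    finally have "h * \<bar>g1 u $3\<bar> \<le> \<Delta> * (h * xyn (g1 u) + norm r) + norm r"
      using D h by (simp add: xyn_scale mult_left_mono)
    also have "\<dots> \<le> \<Delta> * (h * xyn (g1 u) + h * e') + h * e'"
      using r D h by (intro add_mono mult_left_mono) auto
    also have "\<dots> = h * (\<Delta> * xyn (g1 u) + (\<Delta> + 1) * e')"
      by (simp add: algebra_simps)
    also have "(\<Delta> + 1) * e' = e" using D by (simp add: e'_def)
    finally show ?thesis using h by simp
  qed
  have le: "\<bar>g1 u $3\<bar> \<le> \<Delta> * xyn (g1 u)"
    by (rule field_le_epsilon) (rule main)
  have "xyn (g1 u) \<noteq> 0"
  proof
    assume z: "xyn (g1 u) = 0"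
    have "g1 u $3 = 0" using le z by simp
    moreover have "g1 u $1 = 0 \<and> g1 u $2 = 0" using z xyn_eq0 by blast
    ultimately have "g1 u $1 = 0" "g1 u $2 = 0" "g1 u $3 = 0" by auto
    then show False using imm[of u] by (auto simp: vec_eq_iff forall_3)
  qed
  then show "line_slope (vector_derivative \<gamma> (at u)) \<le> ereal \<Delta>"
    using le by (simp add: line_slope_le g1_def[symmetric])
qed

lemma cont_xyn: "continuous_on S (\<lambda>t. xyn (f t))" if "continuous_on S f" for f :: "real \<Rightarrow> real^3"
  unfolding xyn_def using that by (intro continuous_intros)

lemma G4_iff: "(\<exists>\<Delta>\<ge>0. Gamma4 \<gamma> \<Delta>) \<longleftrightarrow> Gamma4' \<gamma>"
proof
  assume "\<exists>\<Delta>\<ge>0. Gamma4 \<gamma> \<Delta>"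
  then obtain \<Delta> where "Gamma4 \<gamma> \<Delta>" by blast
  then show "Gamma4' \<gamma>" unfolding Gamma4_def Gamma4'_def
  proof (intro allI)
    fix u assume "\<forall>u. line_slope (vector_derivative \<gamma> (at u)) \<le> ereal \<Delta>"
    then have "line_slope (vector_derivative \<gamma> (at u)) \<le> ereal \<Delta>" by blast
    then show "line_slope (vector_derivative \<gamma> (at u)) \<noteq> \<infinity>" by auto
  qed
next
  assume G: "Gamma4' \<gamma>"
  have nz: "xyn (g1 u) \<noteq> 0" for u
  proof -
    have "line_slope (g1 u) \<noteq> \<infinity>" using G by (simp add: Gamma4'_def g1_def)
    then show ?thesis by (auto simp: line_slope_def xyn_eq0 split: if_splits)
  qed
  define \<rho> where "\<rho> u = \<bar>g1 u $3\<bar> / xyn (g1 u)" for u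
  have cx: "continuous_on {0..1} (\<lambda>u. xyn (g1 u))" by (rule cont_xyn[OF contOn1])
  have c3: "continuous_on {0..1} (\<lambda>u. \<bar>g1 u $ 3\<bar>)"
    by (rule continuous_on_rabs[OF continuous_on_component[OF contOn1]])
  have "continuous_on {0..1} \<rho>"
    unfolding \<rho>_def using continuous_on_divide[OF c3 cx] nz by blast
  then have "compact (\<rho> ` {0..1})" by (rule compact_continuous_image) simp
  then have "bounded (\<rho> ` {0..1})" by (rule compact_imp_bounded)
  then obtain M where M: "\<And>x. x \<in> \<rho> ` {0..1} \<Longrightarrow> \<bar>x\<bar> \<le> M"
    unfolding bounded_real by blast
  define D0 where "D0 = max M 0"
  have D0: "D0 \<ge> 0" by (simp add: D0_def)
  have "\<bar>g1 u $3\<bar> \<le> D0 * xyn (g1 u)" for u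
  proof -
    have "\<rho> (frac u) \<le> M" using M[of "\<rho> (frac u)"] frac_lt_1[of u] by auto
    then have "\<rho> u \<le> max M 0" by (simp add: \<rho>_def g1_frac)
    moreover have "xyn (g1 u) > 0" using nz xyn_ge0 by (metis less_le)
    ultimately show ?thesis by (simp add: \<rho>_def divide_le_eq D0_def)
  qed
  then have "Gamma4 \<gamma> D0"
    unfolding Gamma4_def
  proof (intro allI)
    fix u assume b: "\<And>u. \<bar>g1 u $3\<bar> \<le> D0 * xyn (g1 u)"
    have "line_slope (g1 u) \<le> ereal D0" unfolding line_slope_le using nz[of u] b[of u] by simp
    then show "line_slope (vector_derivative \<gamma> (at u)) \<le> ereal D0" by (simp add: g1_def)
  qed
  then show "\<exists>\<Delta>\<ge>0. Gamma4 \<gamma> \<Delta>" using D0 by blast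
qed

end

lemma sep_lemma: "\<bar>u - a\<bar> < d \<Longrightarrow> \<bar>v - b\<bar> < d \<Longrightarrow> d = \<bar>b - a\<bar> / 2 \<Longrightarrow> u \<noteq> v" for u v a b d :: real
  by (auto simp: abs_if split: if_splits)

context curve begin

definition DD :: "real \<Rightarrow> real \<Rightarrow> real^3" where
  "DD s t = (if s = t then g1 s else (1/(t-s)) *\<^sub>R (\<gamma> t - \<gamma> s))"

lemma DD_sym: "DD s t = DD t s"
proof (cases "s = t")
  case False
  have "(1/(t-s)) *\<^sub>R (\<gamma> t - \<gamma> s) = (1/(s-t)) *\<^sub>R (\<gamma> s - \<gamma> t)"
  proof -
    have e1: "1/(s-t) = -(1/(t-s))" by (simp add: minus_divide_right)
    have "(1/(s-t)) *\<^sub>R (\<gamma> s - \<gamma> t) = (1/(t-s)) *\<^sub>R (-(\<gamma> s - \<gamma> t))"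
      unfolding e1 by (simp only: scaleR_minus_left scaleR_minus_right)
    then show ?thesis by simp
  qed
  then show ?thesis using False by (simp add: DD_def)
qed (simp add: DD_def)

lemma lin2:
  assumes "e > 0"
  shows "\<exists>\<delta>>0. \<forall>a b. \<bar>a - s0\<bar> < \<delta> \<longrightarrow> \<bar>b - s0\<bar> < \<delta> \<longrightarrow>
           norm (\<gamma> b - \<gamma> a - (b - a) *\<^sub>R g1 s0) \<le> \<bar>b - a\<bar> * e \<and> norm (g1 a - g1 s0) \<le> e"
proof -
  have "\<forall>e>0. \<exists>d>0. \<forall>x. dist x s0 < d \<longrightarrow> dist (g1 x) (g1 s0) < e"
    using cont1[of s0] by (simp add: continuous_at_eps_delta)
  then obtain \<delta> where \<delta>: "\<delta> > 0" "\<And>x. dist x s0 < \<delta> \<Longrightarrow> dist (g1 x) (g1 s0) < e"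
    using assms by blast
  show ?thesis
  proof (intro exI[of _ \<delta>] conjI allI impI)
    fix a b :: real assume a: "\<bar>a - s0\<bar> < \<delta>" and b: "\<bar>b - s0\<bar> < \<delta>"
    have "norm (\<gamma> b - \<gamma> a - (b - a) *\<^sub>R g1 s0) \<le> norm (b - a) * e"
    proof (rule vector_differentiable_bound_linearization[where S="ball s0 \<delta>"])
      show "\<And>x. x \<in> ball s0 \<delta> \<Longrightarrow> (\<gamma> has_vector_derivative g1 x) (at x within ball s0 \<delta>)"
        using d1 has_vector_derivative_at_within by blast
      show "closed_segment a b \<subseteq> ball s0 \<delta>"
        using a b by (intro closed_segment_subset) (auto simp: dist_real_def)
      show "\<And>x. x \<in> ball s0 \<delta> \<Longrightarrow> norm (g1 x - g1 s0) \<le> e"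
        using \<delta>(2) by (auto simp: dist_norm dist_commute less_imp_le)
      show "s0 \<in> ball s0 \<delta>" using \<delta> by simp
    qed
    then show "norm (\<gamma> b - \<gamma> a - (b - a) *\<^sub>R g1 s0) \<le> \<bar>b - a\<bar> * e" by simp
    show "norm (g1 a - g1 s0) \<le> e" using \<delta>(2)[of a] a by (simp add: dist_norm dist_real_def)
  qed (use \<delta> in simp)
qed

lemma DD_near:
  assumes "\<bar>a - s0\<bar> < \<delta>" "\<bar>b - s0\<bar> < \<delta>"
    and H: "\<forall>a b. \<bar>a - s0\<bar> < \<delta> \<longrightarrow> \<bar>b - s0\<bar> < \<delta> \<longrightarrow>
           norm (\<gamma> b - \<gamma> a - (b - a) *\<^sub>R g1 s0) \<le> \<bar>b - a\<bar> * e \<and> norm (g1 a - g1 s0) \<le> e"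
  shows "norm (DD a b - g1 s0) \<le> e"
proof (cases "a = b")
  case True then show ?thesis using H assms by (simp add: DD_def)
next
  case False
  have "DD a b - g1 s0 = (1/(b-a)) *\<^sub>R (\<gamma> b - \<gamma> a - (b - a) *\<^sub>R g1 s0)"
    using False by (simp add: DD_def scaleR_diff_right)
  then have "norm (DD a b - g1 s0) = norm (\<gamma> b - \<gamma> a - (b - a) *\<^sub>R g1 s0) / \<bar>b - a\<bar>"
    by simp
  also have "\<dots> \<le> (\<bar>b - a\<bar> * e) / \<bar>b - a\<bar>"
    using H assms by (intro divide_right_mono) auto
  also have "\<dots> = e" using False by simp
  finally show ?thesis .
qed

lemma DD_cont: "continuous (at p) (\<lambda>p. DD (fst p) (snd p))"
proof (cases "fst p = snd p")
  case True
  show ?thesis unfolding continuous_at_eps_delta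
  proof (intro allI impI)
    fix e :: real assume e: "e > 0"
    then have e2: "e/2 > 0" by simp
    from lin2[OF e2, of "fst p"] obtain \<delta> where \<delta>: "\<delta> > 0" and H: "\<forall>a b. \<bar>a - fst p\<bar> < \<delta> \<longrightarrow> \<bar>b - fst p\<bar> < \<delta> \<longrightarrow>
           norm (\<gamma> b - \<gamma> a - (b - a) *\<^sub>R g1 (fst p)) \<le> \<bar>b - a\<bar> * (e/2) \<and> norm (g1 a - g1 (fst p)) \<le> e/2"
      by blast
    show "\<exists>d>0. \<forall>x. dist x p < d \<longrightarrow> dist (DD (fst x) (snd x)) (DD (fst p) (snd p)) < e"
    proof (intro exI[of _ \<delta>] conjI allI impI)
      fix x assume x: "dist x p < \<delta>"
      have x1: "\<bar>fst x - fst p\<bar> < \<delta>" using x dist_fst_le[of x p] by (simp add: dist_real_def)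
      have x2: "\<bar>snd x - fst p\<bar> < \<delta>" using x dist_snd_le[of x p] True by (simp add: dist_real_def)
      have "norm (DD (fst x) (snd x) - g1 (fst p)) \<le> e/2"
        by (rule DD_near[OF x1 x2 H])
      moreover have "DD (fst p) (snd p) = g1 (fst p)" using True by (simp add: DD_def)
      ultimately show "dist (DD (fst x) (snd x)) (DD (fst p) (snd p)) < e"
        using e by (simp add: dist_norm)
    qed (rule \<delta>)
  qed
next
  case False
  define f where "f = (\<lambda>p::real*real. (1/(snd p - fst p)) *\<^sub>R (\<gamma> (snd p) - \<gamma> (fst p)))"
  have c\<gamma>: "continuous (at p) (\<lambda>q. \<gamma> (h q))" if "continuous (at p) h" for h :: "real*real \<Rightarrow> real"
    using continuous_at_compose[OF that, of \<gamma>] cont0 unfolding o_def by blast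
  have cs: "continuous (at p) (\<lambda>q::real*real. snd q)" by (rule continuous_snd[OF continuous_ident])
  have cf: "continuous (at p) (\<lambda>q::real*real. fst q)" by (rule continuous_fst[OF continuous_ident])
  have cd: "continuous (at p) (\<lambda>q::real*real. snd q - fst q)" by (rule continuous_diff[OF cs cf])
  have ci: "continuous (at p) (\<lambda>q::real*real. 1 / (snd q - fst q))"
    using isCont_divide[OF continuous_const cd] False by simp
  have cfp: "continuous (at p) f"
    unfolding f_def by (rule continuous_scaleR[OF ci continuous_diff[OF c\<gamma>[OF cs] c\<gamma>[OF cf]]])
  define d where "d = \<bar>snd p - fst p\<bar> / 2"
  have d: "d > 0" using False by (simp add: d_def)
  have "continuous (at p within UNIV) (\<lambda>p. DD (fst p) (snd p))"
  proof (rule continuous_transform_within[OF _ d])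
    show "continuous (at p within UNIV) f" using cfp by simp
    show "p \<in> UNIV" by simp
    fix x assume "x \<in> UNIV" and x: "dist x p < d"
    have "\<bar>fst x - fst p\<bar> < d" using x dist_fst_le[of x p] by (simp add: dist_real_def)
    moreover have "\<bar>snd x - snd p\<bar> < d" using x dist_snd_le[of x p] by (simp add: dist_real_def)
    ultimately have "fst x \<noteq> snd x" using d_def sep_lemma by blast
    then show "f x = DD (fst x) (snd x)" by (simp add: f_def DD_def)
  qed
  then show ?thesis by simp
qed

lemma DD_cont_comp:
  assumes "continuous (at q) u" "continuous (at q) v"
  shows "continuous (at q) (\<lambda>q. DD (u q) (v q))"
proof -
  have "continuous (at q) (\<lambda>q. (u q, v q))" using assms by (rule continuous_Pair)
  from continuous_at_compose[OF this DD_cont] show ?thesis by (simp add: o_def)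
qed

lemma DD_pos: "h \<noteq> 0 \<Longrightarrow> \<gamma> (s + h) - \<gamma> s = h *\<^sub>R DD s (s + h)"
  by (simp add: DD_def)

lemma secant_rep:
  assumes "\<gamma> u \<noteq> \<gamma> v"
  shows "\<exists>s h. 0 \<le> s \<and> s \<le> 1 \<and> 0 < h \<and> h \<le> 1/2 \<and>
     (\<gamma> u - \<gamma> v = \<gamma> (s+h) - \<gamma> s \<or> \<gamma> v - \<gamma> u = \<gamma> (s+h) - \<gamma> s)"
proof -
  define a where "a = frac u"
  define b where "b = frac v"
  have ga: "\<gamma> u = \<gamma> a" and gb: "\<gamma> v = \<gamma> b" by (simp_all add: a_def b_def per_frac)
  have ab: "a \<noteq> b" using assms ga gb by auto
  have a01: "0 \<le> a" "a < 1" and b01: "0 \<le> b" "b < 1" by (simp_all add: a_def b_def frac_lt_1)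
  have key: "\<exists>s h. 0 \<le> s \<and> s \<le> 1 \<and> 0 < h \<and> h \<le> 1/2 \<and>
     (\<gamma> y - \<gamma> x = \<gamma> (s+h) - \<gamma> s \<or> \<gamma> x - \<gamma> y = \<gamma> (s+h) - \<gamma> s)"
    if xy: "0 \<le> x" "x < y" "y < 1" for x y
  proof (cases "y - x \<le> 1/2")
    case True
    then show ?thesis using xy by (intro exI[of _ x] exI[of _ "y - x"]) auto
  next
    case False
    have "\<gamma> (y + (x + 1 - y)) = \<gamma> x" using per[of x] by simp
    then show ?thesis using xy False by (intro exI[of _ y] exI[of _ "x + 1 - y"]) auto
  qed
  show ?thesis
  proof (cases "a < b")
    case True
    from key[OF a01(1) True b01(2)] show ?thesis unfolding ga gb by blast
  next
    case False
    then have "b < a" using ab by simp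
    from key[OF b01(1) this a01(2)] show ?thesis unfolding ga gb by blast
  qed
qed

lemma G1_G4_G3:
  assumes G1: "Gamma1 \<gamma>" and G4: "Gamma4 \<gamma> \<Delta>4"
  shows "\<exists>\<Delta>\<ge>0. Gamma3 \<gamma> \<Delta>"
proof -
  define F where "F q = DD (fst q) (fst q + snd q)" for q :: "real*real"
  have Fc: "continuous_on ({0..1} \<times> {0..1/2}) F"
    unfolding F_def
  proof (intro continuous_at_imp_continuous_on ballI)
    fix x :: "real*real"
    have cf: "continuous (at x) (\<lambda>q::real*real. fst q)" by (rule continuous_fst[OF continuous_ident])
    have cs: "continuous (at x) (\<lambda>q::real*real. snd q)" by (rule continuous_snd[OF continuous_ident])
    show "isCont (\<lambda>q. DD (fst q) (fst q + snd q)) x"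
      by (rule DD_cont_comp[OF cf continuous_add[OF cf cs]])
  qed
  have nz: "xyn (F q) \<noteq> 0" if q: "q \<in> {0..1} \<times> {0..1/2}" for q
  proof (cases "snd q = 0")
    case True
    have "line_slope (g1 (fst q)) \<le> ereal \<Delta>4" using G4 by (simp add: Gamma4_def g1_def)
    then show ?thesis using True by (simp add: F_def DD_def line_slope_le)
  next
    case False
    then have h: "0 < snd q" "snd q \<le> 1/2" using q by auto
    have "(fst q + snd q) - fst q \<notin> \<int>" using notInts[of "snd q"] h by simp
    from proj_inj[OF G1 this] have "xyn (\<gamma> (fst q + snd q) - \<gamma> (fst q)) \<noteq> 0"
      by (simp add: xyn_eq0)
    moreover have "\<gamma> (fst q + snd q) - \<gamma> (fst q) = snd q *\<^sub>R F q"
      using DD_pos[of "snd q" "fst q"] h by (simp add: F_def)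
    ultimately show ?thesis by (auto simp: xyn_scale)
  qed
  define \<rho> where "\<rho> q = \<bar>F q $ 3\<bar> / xyn (F q)" for q
  have c3: "continuous_on ({0..1} \<times> {0..1/2}) (\<lambda>q. \<bar>F q $ 3\<bar>)"
    by (rule continuous_on_rabs[OF continuous_on_component[OF Fc]])
  have cx: "continuous_on ({0..1} \<times> {0..1/2}) (\<lambda>q. xyn (F q))"
    unfolding xyn_def by (intro continuous_intros Fc)
  have "continuous_on ({0..1} \<times> {0..1/2}) \<rho>"
    unfolding \<rho>_def using continuous_on_divide[OF c3 cx] nz by blast
  then have "compact (\<rho> ` ({0..1} \<times> {0..1/2}))"
    by (rule compact_continuous_image) (intro compact_Times compact_Icc)
  then have "bounded (\<rho> ` ({0..1} \<times> {0..1/2}))" by (rule compact_imp_bounded)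
  then obtain M where M: "\<And>x. x \<in> \<rho> ` ({0..1} \<times> {0..1/2}) \<Longrightarrow> \<bar>x\<bar> \<le> M"
    unfolding bounded_real by blast
  define D0 where "D0 = max M 0"
  have D0: "D0 \<ge> 0" by (simp add: D0_def)
  have "Gamma3 \<gamma> D0" unfolding Gamma3_def
  proof (intro allI impI)
    fix u v assume uv: "\<gamma> u \<noteq> \<gamma> v"
    obtain s h where sh: "0 \<le> s" "s \<le> 1" "0 < h" "h \<le> 1/2"
      and eq: "\<gamma> u - \<gamma> v = \<gamma> (s+h) - \<gamma> s \<or> \<gamma> v - \<gamma> u = \<gamma> (s+h) - \<gamma> s"
      using secant_rep[OF uv] by blast
    define q where "q = (s, h)"
    have q: "q \<in> {0..1} \<times> {0..1/2}" using sh by (simp add: q_def)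
    have "\<rho> q \<le> D0" using M[of "\<rho> q"] q by (auto simp: D0_def)
    then have b: "\<bar>F q $ 3\<bar> \<le> D0 * xyn (F q)" "xyn (F q) \<noteq> 0"
      using nz[OF q] xyn_ge0[of "F q"] by (auto simp: \<rho>_def divide_le_eq)
    have e: "\<gamma> (s+h) - \<gamma> s = h *\<^sub>R F q" using DD_pos[of h s] sh by (simp add: F_def q_def)
    have hF: "xyn (h *\<^sub>R F q) \<noteq> 0 \<and> \<bar>(h *\<^sub>R F q) $ 3\<bar> \<le> D0 * xyn (h *\<^sub>R F q)"
      using b sh D0 by (simp add: xyn_scale abs_mult mult_left_mono)
    have xm: "xyn (- w) = xyn w" for w by (simp add: xyn_def)
    show "line_slope (\<gamma> u - \<gamma> v) \<le> ereal D0"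
    proof (cases "\<gamma> u - \<gamma> v = \<gamma> (s+h) - \<gamma> s")
      case True then show ?thesis using hF e unfolding line_slope_le by simp
    next
      case False
      then have "\<gamma> u - \<gamma> v = - (h *\<^sub>R F q)" using eq e by (metis minus_diff_eq)
      then show ?thesis using hF xm unfolding line_slope_le by simp
    qed
  qed
  then show ?thesis using D0 by blast
qed

end

lemma notInts': "0 < \<bar>r\<bar> \<Longrightarrow> \<bar>r\<bar> < 1 \<Longrightarrow> (r::real) \<notin> \<int>"
  by (metis Ints_minus abs_if notInts)

context curve begin

lemma three_pt_ord:
  assumes G1: "Gamma1 \<gamma>" and n: "n$3 = 0" "n \<noteq> 0"
    and h: "n \<bullet> \<gamma> y = n \<bullet> \<gamma> x" "n \<bullet> \<gamma> z = n \<bullet> \<gamma> x"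
    and o: "x < y" "y < z" "z - x < 1"
  shows False
proof -
  have "x - y \<notin> \<int>" by (rule notInts') (use o in auto)
  moreover have "x - z \<notin> \<int>" by (rule notInts') (use o in auto)
  moreover have "y - z \<notin> \<int>" by (rule notInts') (use o in auto)
  ultimately have "x - y \<notin> \<int>" "x - z \<notin> \<int>" "y - z \<notin> \<int>" by auto
  then show False using three_pt[OF G1 n, of x "n \<bullet> \<gamma> x" y z] h by auto
qed

lemma noncol:
  assumes G1: "Gamma1 \<gamma>" and o: "a < b" "b < c" "c - a < 1"
  shows "(cross3 (\<gamma> b - \<gamma> a) (\<gamma> c - \<gamma> b))$3 \<noteq> 0"
proof
  assume z: "(cross3 (\<gamma> b - \<gamma> a) (\<gamma> c - \<gamma> b))$3 = 0"
  define p where "p = \<gamma> b - \<gamma> a"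
  define q where "q = \<gamma> c - \<gamma> b"
  have "b - a \<notin> \<int>" using o by (intro notInts) auto
  from proj_inj[OF G1 this] have p12: "p$1 \<noteq> 0 \<or> p$2 \<noteq> 0" by (auto simp: p_def)
  define n :: "real^3" where "n = vector [- p$2, p$1, 0]"
  have n3: "n$3 = 0" by (simp add: n_def)
  have nn: "n \<noteq> 0" using p12 by (auto simp: n_def vec_eq_iff forall_3)
  have "n \<bullet> p = 0" by (simp add: n_def inner3)
  moreover have "n \<bullet> q = 0" using z by (simp add: n_def inner3 cross_components p_def q_def algebra_simps)
  ultimately have "n \<bullet> \<gamma> b = n \<bullet> \<gamma> a" "n \<bullet> \<gamma> c = n \<bullet> \<gamma> a"
    by (auto simp: p_def q_def inner_diff_right)
  then show False using three_pt_ord[OF G1 n3 nn] o by blast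
qed

lemma osc:
  assumes G5: "Gamma5 \<gamma> \<Delta>"
  shows "(cross3 (g1 t) (g2 t))$3 \<noteq> 0"
proof
  assume z: "(cross3 (g1 t) (g2 t))$3 = 0"
  define \<phi> where "\<phi> u = inverse (norm (g1 u))" for u
  have nd: "((\<lambda>u. norm (g1 u)) has_derivative ((\<lambda>h. h \<bullet> sgn (g1 t)) \<circ> (\<lambda>h. h *\<^sub>R g2 t))) (at t)"
    using diff_chain_at[OF d2[of t, unfolded has_vector_derivative_def] has_derivative_norm[OF imm[of t]]]
    by (simp add: o_def)
  moreover have "((\<lambda>h. h \<bullet> sgn (g1 t)) \<circ> (\<lambda>h. h *\<^sub>R g2 t)) = (*) (g2 t \<bullet> sgn (g1 t))"
    by (auto simp: o_def mult.commute)
  ultimately have "((\<lambda>u. norm (g1 u)) has_real_derivative (g2 t \<bullet> sgn (g1 t))) (at t)"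
    by (simp add: has_field_derivative_def)
  from DERIV_inverse_fun[OF this] imm[of t]
  obtain \<phi>' where dphi: "(\<phi> has_real_derivative \<phi>') (at t)" unfolding \<phi>_def[abs_def] by auto
  have ut: "unit_tangent \<gamma> = (\<lambda>u. \<phi> u *\<^sub>R g1 u)"
    by (auto simp: unit_tangent_def \<phi>_def g1_def)
  define T' where "T' = \<phi> t *\<^sub>R g2 t + \<phi>' *\<^sub>R g1 t"
  have "((\<lambda>u. \<phi> u *\<^sub>R g1 u) has_vector_derivative T') (at t)"
    unfolding T'_def by (rule has_vector_derivative_scaleR[OF dphi d2])
  then have vd: "vector_derivative (unit_tangent \<gamma>) (at t) = T'"
    unfolding ut by (rule vector_derivative_at)
  have "cross3 (g1 t) T' = \<phi> t *\<^sub>R cross3 (g1 t) (g2 t)"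
    by (simp add: T'_def cross_add_right cross_mult_right)
  have osc_eq: "osculating_normal \<gamma> t = (\<phi> t * inverse (norm T')) *\<^sub>R (\<phi> t *\<^sub>R cross3 (g1 t) (g2 t))"
    unfolding osculating_normal_def unit_normal_def vd
    by (simp add: ut T'_def cross_add_right cross_mult_right cross_mult_left)
  then have "osculating_normal \<gamma> t $ 3 = 0" using z by simp
  then have "plane_slope (osculating_normal \<gamma> t) = \<infinity>" by (simp add: plane_slope_def)
  moreover have "plane_slope (osculating_normal \<gamma> t) \<le> ereal \<Delta>" using G5 by (simp add: Gamma5_def)
  ultimately show False by simp
qed

lemma dF: "((\<lambda>t. n \<bullet> (\<gamma> t - \<gamma> s)) has_real_derivative (n \<bullet> g1 t)) (at t)"
proof -
  have "((\<lambda>u. \<gamma> u - \<gamma> s) has_vector_derivative g1 t) (at t)"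
    using has_vector_derivative_diff[OF d1 has_vector_derivative_const] by simp
  from bounded_linear.has_vector_derivative[OF bounded_linear_inner_right this, of n]
  show ?thesis by (simp add: has_real_derivative_iff_has_vector_derivative)
qed

lemma cF: "continuous_on S (\<lambda>t. n \<bullet> (\<gamma> t - \<gamma> s))"
  by (intro continuous_at_imp_continuous_on ballI DERIV_isCont[OF dF])

lemma same_sign:
  assumes G1: "Gamma1 \<gamma>" and n: "n$3 = 0" "n \<noteq> 0"
    and sr: "s < mA" "mA < r" "r - 1 < mB" "mB < s"
    and Fr: "n \<bullet> (\<gamma> r - \<gamma> s) = 0" and FA: "n \<bullet> (\<gamma> mA - \<gamma> s) > 0" and FB: "n \<bullet> (\<gamma> mB - \<gamma> s) > 0"
  shows False
proof -
  define F where "F t = n \<bullet> (\<gamma> t - \<gamma> s)" for t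
  have cF': "continuous_on S F" for S unfolding F_def[abs_def] by (rule cF)
  define \<epsilon> where "\<epsilon> = min (F mA) (F mB) / 2"
  have \<epsilon>: "0 < \<epsilon>" "\<epsilon> < F mA" "\<epsilon> < F mB" using FA FB by (auto simp: \<epsilon>_def F_def)
  have Fs: "F s = 0" by (simp add: F_def)
  have Fr': "F r = 0" using Fr by (simp add: F_def)
  obtain t1 where t1: "s \<le> t1" "t1 \<le> mA" "F t1 = \<epsilon>"
    using IVT'[of F s \<epsilon> mA, OF _ _ _ cF'] Fs \<epsilon> sr by auto
  obtain t2 where t2: "mA \<le> t2" "t2 \<le> r" "F t2 = \<epsilon>"
    using IVT2'[of F r \<epsilon> mA, OF _ _ _ cF'] Fr' \<epsilon> sr by auto
  obtain t3 where t3: "mB \<le> t3" "t3 \<le> s" "F t3 = \<epsilon>"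
    using IVT2'[of F s \<epsilon> mB, OF _ _ _ cF'] Fs \<epsilon> sr by auto
  have o: "t3 < t1" "t1 < t2" "t2 - t3 < 1"
    using t1 t2 t3 \<epsilon> Fs Fr' sr by (auto simp: less_le)
  have "n \<bullet> \<gamma> t1 = n \<bullet> \<gamma> t3" "n \<bullet> \<gamma> t2 = n \<bullet> \<gamma> t3"
    using t1(3) t2(3) t3(3) by (auto simp: F_def inner_diff_right)
  then show False using three_pt_ord[OF G1 n] o by blast
qed

lemma opp_sign:
  assumes G1: "Gamma1 \<gamma>" and n: "n$3 = 0" "n \<noteq> 0" and bh: "bh$3 = 0" "n \<bullet> bh = 0"
    and nb: "n \<bullet> g1 s = 0" and bb: "bh \<bullet> g1 s > 0"
    and sr: "s < mA" "mA < r" "r - 1 < mB" "mB < s"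
    and FA: "n \<bullet> (\<gamma> mA - \<gamma> s) > 0" and FB: "n \<bullet> (\<gamma> mB - \<gamma> s) < 0"
  shows False
proof -
  define F where "F t = n \<bullet> (\<gamma> t - \<gamma> s)" for t
  define H where "H t = bh \<bullet> (\<gamma> t - \<gamma> s)" for t
  define kA where "kA = 2 * \<bar>H mA\<bar> + 1"
  define kB where "kB = 2 * \<bar>H mB\<bar> + 1"
  define \<delta> where "\<delta> = - min (F mA / kA) (- F mB / kB)"
  have kA: "kA > 0" and kB: "kB > 0" by (simp_all add: kA_def kB_def add_nonneg_pos)
  have FA': "F mA > 0" and FB': "F mB < 0" using FA FB by (simp_all add: F_def)
  have qb: "F mB / kB < 0" using FB' kB by (simp add: divide_neg_pos)
  have qa: "F mA / kA > 0" using FA' kA by simp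
  have \<delta>neg: "\<delta> < 0" using qa qb by (simp add: \<delta>_def)
  have absd: "\<bar>\<delta>\<bar> = min (F mA / kA) (- (F mB / kB))" using qa qb by (simp add: \<delta>_def)
  have "\<bar>\<delta>\<bar> \<le> F mA / kA" using absd by simp
  then have dA: "\<bar>\<delta>\<bar> * kA \<le> F mA" using kA by (simp add: pos_le_divide_eq)
  have "\<bar>\<delta>\<bar> \<le> (- F mB) / kB" using absd by simp
  then have dB: "\<bar>\<delta>\<bar> * kB \<le> - F mB" using kB by (simp only: pos_le_divide_eq)
  define m where "m = n + \<delta> *\<^sub>R bh"
  define G where "G t = m \<bullet> (\<gamma> t - \<gamma> s)" for t
  have GFH: "G t = F t + \<delta> * H t" for t by (simp add: G_def F_def H_def m_def inner_add_left)
  have GA: "G mA > 0"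
  proof -
    have "\<bar>\<delta> * H mA\<bar> \<le> \<bar>\<delta>\<bar> * (kA / 2)" unfolding abs_mult by (rule mult_left_mono) (auto simp: kA_def)
    also have "\<dots> \<le> F mA / 2" using dA by simp
    finally show ?thesis using FA' GFH[of mA] by linarith
  qed
  have GB: "G mB < 0"
  proof -
    have "\<bar>\<delta> * H mB\<bar> \<le> \<bar>\<delta>\<bar> * (kB / 2)" unfolding abs_mult by (rule mult_left_mono) (auto simp: kB_def)
    also have "\<dots> \<le> - F mB / 2" using dB by simp
    finally show ?thesis using FB' GFH[of mB] by linarith
  qed
  have m3: "m$3 = 0" using n bh by (simp add: m_def)
  have mn: "m \<noteq> 0"
  proof
    assume "m = 0"
    then have "m \<bullet> n = 0" by simp
    moreover have "m \<bullet> n = n \<bullet> n" using bh by (simp add: m_def inner_add_left inner_commute[of bh n])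
    ultimately show False using n by simp
  qed
  have dG: "(G has_real_derivative (m \<bullet> g1 s)) (at s)" unfolding G_def[abs_def] by (rule dF)
  have mg: "m \<bullet> g1 s < 0" using nb bb \<delta>neg by (simp add: m_def inner_add_left mult_neg_pos)
  have Gs: "G s = 0" by (simp add: G_def)
  obtain d1 where d1: "d1 > 0" "\<And>h. h > 0 \<Longrightarrow> h < d1 \<Longrightarrow> G (s + h) < 0"
    using DERIV_neg_dec_right[OF dG mg] Gs by auto
  obtain d2 where d2: "d2 > 0" "\<And>h. h > 0 \<Longrightarrow> h < d2 \<Longrightarrow> G (s - h) > 0"
    using DERIV_neg_dec_left[OF dG mg] Gs by auto
  define \<tau> where "\<tau> = min (min d1 d2) (min (mA - s) (s - mB)) / 2"
  have \<tau>: "\<tau> > 0" "\<tau> < d1" "\<tau> < d2" "\<tau> < mA - s" "\<tau> < s - mB"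
    using d1 d2 sr by (auto simp: \<tau>_def)
  have cG: "continuous_on S G" for S unfolding G_def[abs_def] by (rule cF)
  obtain t1 where t1: "s + \<tau> \<le> t1" "t1 \<le> mA" "G t1 = 0"
    using IVT'[of G "s + \<tau>" 0 mA, OF _ _ _ cG] d1(2)[of \<tau>] \<tau> GA by auto
  obtain t2 where t2: "mB \<le> t2" "t2 \<le> s - \<tau>" "G t2 = 0"
    using IVT'[of G mB 0 "s - \<tau>", OF _ _ _ cG] d2(2)[of \<tau>] \<tau> GB by auto
  have o: "t2 < s" "s < t1" "t1 - t2 < 1" using t1 t2 \<tau> sr by auto
  have "m \<bullet> \<gamma> s = m \<bullet> \<gamma> t2" "m \<bullet> \<gamma> t1 = m \<bullet> \<gamma> t2"
    using t1(3) t2(3) by (auto simp: G_def inner_diff_right)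
  then show False using three_pt_ord[OF G1 m3 mn] o by blast
qed

lemma tang_ord:
  assumes G1: "Gamma1 \<gamma>" and G4: "\<And>t. xyn (g1 t) \<noteq> 0" and sr: "s < r" "r < s + 1"
  shows "(cross3 (g1 s) (\<gamma> r - \<gamma> s))$3 \<noteq> 0"
proof
  assume z: "(cross3 (g1 s) (\<gamma> r - \<gamma> s))$3 = 0"
  define b where "b = g1 s"
  define a :: "real^3" where "a = vector [- b$2, b$1, 0]"
  define bh :: "real^3" where "bh = vector [b$1, b$2, 0]"
  have b12: "b$1 \<noteq> 0 \<or> b$2 \<noteq> 0" using G4[of s] by (simp add: xyn_eq0 b_def)
  have a3: "a$3 = 0" and an: "a \<noteq> 0" using b12 by (auto simp: a_def vec_eq_iff forall_3)
  have bh3: "bh$3 = 0" by (simp add: bh_def)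
  have abh: "a \<bullet> bh = 0" by (simp add: a_def bh_def inner3)
  have ab: "a \<bullet> g1 s = 0" by (simp add: a_def b_def[symmetric] inner3)
  have "0 < (b$1)^2 + (b$2)^2"
    using b12 by (metis add_pos_nonneg add_nonneg_pos zero_le_power2 zero_less_power2)
  then have bb: "bh \<bullet> g1 s > 0"
    by (simp add: bh_def b_def[symmetric] inner3 power2_eq_square)
  have Fr: "a \<bullet> (\<gamma> r - \<gamma> s) = 0" using z by (simp add: a_def b_def inner3 cross_components algebra_simps)
  define mA where "mA = (s + r) / 2"
  define mB where "mB = (r - 1 + s) / 2"
  have m: "s < mA" "mA < r" "r - 1 < mB" "mB < s" using sr by (auto simp: mA_def mB_def)
  have Frw: "a \<bullet> \<gamma> r = a \<bullet> \<gamma> s" using Fr by (simp add: inner_diff_right)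
  have FA0: "a \<bullet> (\<gamma> mA - \<gamma> s) \<noteq> 0"
  proof
    assume "a \<bullet> (\<gamma> mA - \<gamma> s) = 0"
    then have "a \<bullet> \<gamma> mA = a \<bullet> \<gamma> s" by (simp add: inner_diff_right)
    then show False using three_pt_ord[OF G1 a3 an, of mA s r] Frw m sr by auto
  qed
  have FB0: "a \<bullet> (\<gamma> mB - \<gamma> s) \<noteq> 0"
  proof
    assume "a \<bullet> (\<gamma> mB - \<gamma> s) = 0"
    then have "a \<bullet> \<gamma> s = a \<bullet> \<gamma> mB" by (simp add: inner_diff_right)
    then show False using three_pt_ord[OF G1 a3 an, of s mB r] Frw m sr by auto
  qed
  have na3: "(-a)$3 = 0" and nan: "-a \<noteq> 0" using a3 an by auto
  have neg: "(-a) \<bullet> v = - (a \<bullet> v)" for v by simp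
  show False
  proof (cases "a \<bullet> (\<gamma> mA - \<gamma> s) > 0")
    case A: True
    show False
    proof (cases "a \<bullet> (\<gamma> mB - \<gamma> s) > 0")
      case True
      then show False using same_sign[OF G1 a3 an m Fr A] by blast
    next
      case False
      then have "a \<bullet> (\<gamma> mB - \<gamma> s) < 0" using FB0 by simp
      then show False using opp_sign[OF G1 a3 an bh3 abh ab bb m A] by blast
    qed
  next
    case A: False
    then have A': "(-a) \<bullet> (\<gamma> mA - \<gamma> s) > 0" using FA0 by simp
    show False
    proof (cases "a \<bullet> (\<gamma> mB - \<gamma> s) > 0")
      case True
      then have "(-a) \<bullet> (\<gamma> mB - \<gamma> s) < 0" by simp
      moreover have "(-a) \<bullet> bh = 0" "(-a) \<bullet> g1 s = 0" using abh ab by simp_all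
      ultimately show False using opp_sign[OF G1 na3 nan bh3 _ _ bb m A'] by blast
    next
      case False
      then have "(-a) \<bullet> (\<gamma> mB - \<gamma> s) > 0" using FB0 by simp
      moreover have "(-a) \<bullet> (\<gamma> r - \<gamma> s) = 0" using Fr by simp
      ultimately show False using same_sign[OF G1 na3 nan m _ A'] by blast
    qed
  qed
qed

lemma tang:
  assumes G1: "Gamma1 \<gamma>" and G4: "\<And>t. xyn (g1 t) \<noteq> 0" and d: "r - s \<notin> \<int>"
  shows "(cross3 (g1 s) (\<gamma> r - \<gamma> s))$3 \<noteq> 0"
proof -
  define r' where "r' = s + frac (r - s)"
  have f: "0 < frac (r - s)" "frac (r - s) < 1" using d frac_lt_1[of "r - s"] frac_ge_0[of "r - s"]
    by (auto simp: order.order_iff_strict frac_eq_0_iff)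
  have "r' = r + real_of_int (- \<lfloor>r - s\<rfloor>)" by (simp add: r'_def frac_def)
  then have "\<gamma> r' = \<gamma> r" using per_int[of r "- \<lfloor>r - s\<rfloor>"] by simp
  moreover have "s < r'" "r' < s + 1" using f by (auto simp: r'_def)
  ultimately show ?thesis using tang_ord[OF G1 G4] by metis
qed

end

lemma cross_sub_self: "cross3 x (k *\<^sub>R (y - x)) = k *\<^sub>R cross3 x y"
  by (simp add: cross_mult_right Cross3.right_diff_distrib)

lemma sqabs: "\<bar>a\<bar> * (\<bar>a\<bar> * e) = e * (a::real)^2"
proof -
  have "\<bar>a\<bar> * (\<bar>a\<bar> * e) = e * (\<bar>a\<bar> * \<bar>a\<bar>)" by (simp only: mult_ac)
  also have "\<bar>a\<bar> * \<bar>a\<bar> = a^2" by (simp add: power2_eq_square)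
  finally show ?thesis .
qed

lemma cancelA: "A \<noteq> 0 \<Longrightarrow> e * (A * A) / A = e * (A::real)"
  by simp

lemma normal_parallel:
  assumes np: "n \<bullet> p = 0" and nq: "n \<bullet> q = 0" and m3: "(cross3 p q)$3 \<noteq> 0"
    and mb: "xyn (cross3 p q) \<le> D * \<bar>(cross3 p q)$3\<bar>" and nn: "n \<noteq> 0"
  shows "n$3 \<noteq> 0 \<and> xyn n \<le> D * \<bar>n$3\<bar>"
proof -
  define m where "m = cross3 p q"
  have "cross3 n m = (n \<bullet> q) *\<^sub>R p - (n \<bullet> p) *\<^sub>R q" unfolding m_def by (rule Lagrange)
  then have z: "cross3 n m = 0" using np nq by simp
  then have c1: "n$2 * m$3 - m$2 * n$3 = 0" and c2: "n$3 * m$1 - m$3 * n$1 = 0"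
    using cross_components(1,2)[of n m] by (simp_all add: vec_eq_iff)
  have m3': "m$3 \<noteq> 0" using m3 by (simp add: m_def)
  define k where "k = n$3 / m$3"
  have n1: "n$1 = k * m$1" using c2 m3' by (simp add: k_def field_simps)
  have n2: "n$2 = k * m$2" using c1 m3' by (simp add: k_def field_simps)
  have n3: "n$3 = k * m$3" using m3' by (simp add: k_def)
  have "n$3 \<noteq> 0"
  proof
    assume "n$3 = 0"
    then have "k = 0" using m3' by (simp add: k_def)
    then show False using nn n1 n2 n3 by (auto simp: vec_eq_iff forall_3)
  qed
  moreover have "xyn n = \<bar>k\<bar> * xyn m"
    using xyn_scale[of k m] by (simp add: xyn_def n1 n2)
  moreover have "\<bar>k\<bar> * xyn m \<le> \<bar>k\<bar> * (D * \<bar>m$3\<bar>)" using mb by (intro mult_left_mono) (auto simp: m_def)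
  moreover have "\<bar>k\<bar> * (D * \<bar>m$3\<bar>) = D * \<bar>n$3\<bar>" by (simp add: n3 abs_mult)
  ultimately show ?thesis by simp
qed

context curve begin

lemma taylor2:
  assumes "e > 0"
  shows "\<exists>\<delta>>0. \<forall>x y. \<bar>x - a0\<bar> < \<delta> \<longrightarrow> \<bar>y - a0\<bar> < \<delta> \<longrightarrow>
     norm (\<gamma> y - \<gamma> x - (y - x) *\<^sub>R g1 x - ((y - x)^2/2) *\<^sub>R g2 a0) \<le> e * (y - x)^2
     \<and> norm (g2 x - g2 a0) \<le> e"
proof -
  have "\<forall>e>0. \<exists>d>0. \<forall>x. dist x a0 < d \<longrightarrow> dist (g2 x) (g2 a0) < e"
    using cont2[of a0] by (simp add: continuous_at_eps_delta)
  then obtain \<delta> where \<delta>: "\<delta> > 0" "\<And>x. dist x a0 < \<delta> \<Longrightarrow> dist (g2 x) (g2 a0) < e"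
    using assms by blast
  define c where "c = g2 a0"
  have stepA: "norm (g1 z - g1 x - (z - x) *\<^sub>R c) \<le> \<bar>z - x\<bar> * e"
    if x: "x \<in> ball a0 \<delta>" and z: "z \<in> ball a0 \<delta>" for x z
  proof -
    have "norm (g1 z - g1 x - (z - x) *\<^sub>R g2 a0) \<le> norm (z - x) * e"
    proof (rule vector_differentiable_bound_linearization[where S="ball a0 \<delta>"])
      show "\<And>t. t \<in> ball a0 \<delta> \<Longrightarrow> (g1 has_vector_derivative g2 t) (at t within ball a0 \<delta>)"
        using d2 has_vector_derivative_at_within by blast
      show "closed_segment x z \<subseteq> ball a0 \<delta>"
        using x z by (intro closed_segment_subset) auto
      show "\<And>t. t \<in> ball a0 \<delta> \<Longrightarrow> norm (g2 t - g2 a0) \<le> e"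
        using \<delta>(2) by (auto simp: dist_norm dist_commute less_imp_le)
      show "a0 \<in> ball a0 \<delta>" using \<delta> by simp
    qed
    then show ?thesis by (simp add: c_def)
  qed
  show ?thesis
  proof (intro exI[of _ \<delta>] conjI allI impI)
    fix x y :: real assume x: "\<bar>x - a0\<bar> < \<delta>" and y: "\<bar>y - a0\<bar> < \<delta>"
    have xb: "x \<in> ball a0 \<delta>" and yb: "y \<in> ball a0 \<delta>" using x y by (auto simp: dist_real_def)
    define g where "g t = \<gamma> t - ((t - x)^2/2) *\<^sub>R c" for t
    define g' where "g' t = g1 t - (t - x) *\<^sub>R c" for t
    have seg: "closed_segment x y \<subseteq> ball a0 \<delta>" using xb yb by (intro closed_segment_subset) auto
    have dq: "((\<lambda>t. (t - x)^2/2) has_real_derivative (t - x)) (at t)" for t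
      by (auto intro!: derivative_eq_intros)
    have dg: "(g has_vector_derivative g' t) (at t within closed_segment x y)" for t
    proof -
      have "((\<lambda>t. ((t - x)^2/2) *\<^sub>R c) has_vector_derivative (((t - x)^2/2) *\<^sub>R 0 + (t - x) *\<^sub>R c)) (at t)"
        by (rule has_vector_derivative_scaleR[OF dq has_vector_derivative_const])
      then have "(g has_vector_derivative g' t) (at t)"
        unfolding g_def[abs_def] g'_def using has_vector_derivative_diff[OF d1] by simp
      then show ?thesis by (rule has_vector_derivative_at_within)
    qed
    have "norm (g y - g x - (y - x) *\<^sub>R g' x) \<le> norm (y - x) * (\<bar>y - x\<bar> * e)"
    proof (rule vector_differentiable_bound_linearization[where S="closed_segment x y"])
      show "\<And>t. t \<in> closed_segment x y \<Longrightarrow> (g has_vector_derivative g' t) (at t within closed_segment x y)"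
        by (rule dg)
      show "closed_segment x y \<subseteq> closed_segment x y" by simp
      show "x \<in> closed_segment x y" by simp
      fix t assume t: "t \<in> closed_segment x y"
      have "\<bar>t - x\<bar> \<le> \<bar>y - x\<bar>" using t by (auto simp: closed_segment_eq_real_ivl split: if_splits)
      have "g' t - g' x = g1 t - g1 x - (t - x) *\<^sub>R c" by (simp add: g'_def)
      then have "norm (g' t - g' x) \<le> \<bar>t - x\<bar> * e" using stepA[OF xb] seg t by auto
      also have "\<dots> \<le> \<bar>y - x\<bar> * e" using \<open>\<bar>t - x\<bar> \<le> \<bar>y - x\<bar>\<close> assms by (simp add: mult_right_mono)
      finally show "norm (g' t - g' x) \<le> \<bar>y - x\<bar> * e" .
    qed
    moreover have "g y - g x - (y - x) *\<^sub>R g' x = \<gamma> y - \<gamma> x - (y - x) *\<^sub>R g1 x - ((y - x)^2/2) *\<^sub>R g2 a0"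
      by (simp add: g_def g'_def c_def)
    ultimately have le: "norm (\<gamma> y - \<gamma> x - (y - x) *\<^sub>R g1 x - ((y - x)^2/2) *\<^sub>R g2 a0) \<le> \<bar>y - x\<bar> * (\<bar>y - x\<bar> * e)"
      by simp
    have sq: "\<bar>y - x\<bar> * (\<bar>y - x\<bar> * e) = e * (y - x)^2" by (rule sqabs)
    show "norm (\<gamma> y - \<gamma> x - (y - x) *\<^sub>R g1 x - ((y - x)^2/2) *\<^sub>R g2 a0) \<le> e * (y - x)^2"
      using le sq by linarith
    show "norm (g2 x - g2 a0) \<le> e" using \<delta>(2)[of x] xb by (simp add: dist_norm dist_real_def less_imp_le)
  qed (rule \<delta>(1))
qed

lemma DD2:
  assumes H: "\<forall>x y. \<bar>x - a0\<bar> < \<delta> \<longrightarrow> \<bar>y - a0\<bar> < \<delta> \<longrightarrow>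
     norm (\<gamma> y - \<gamma> x - (y - x) *\<^sub>R g1 x - ((y - x)^2/2) *\<^sub>R g2 a0) \<le> e * (y - x)^2
     \<and> norm (g2 x - g2 a0) \<le> e"
    and x: "\<bar>x - a0\<bar> < \<delta>" and y: "\<bar>y - a0\<bar> < \<delta>"
  shows "norm (DD x y - g1 x - ((y - x)/2) *\<^sub>R g2 a0) \<le> e * \<bar>y - x\<bar>"
proof (cases "x = y")
  case True
  have "norm (g2 x - g2 a0) \<le> e" using H x by blast
  then have "e \<ge> 0" by (rule order_trans[OF norm_ge_zero])
  then show ?thesis using True by (simp add: DD_def)
next
  case False
  define k where "k = 1/(y - x)"
  have k1: "k * (y - x) = 1" using False by (simp add: k_def)
  have k2: "k * ((y - x)^2/2) = (y - x)/2" using False by (simp add: k_def power2_eq_square)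
  have "k *\<^sub>R (\<gamma> y - \<gamma> x - (y - x) *\<^sub>R g1 x - ((y - x)^2/2) *\<^sub>R g2 a0) =
        k *\<^sub>R (\<gamma> y - \<gamma> x) - (k * (y - x)) *\<^sub>R g1 x - (k * ((y - x)^2/2)) *\<^sub>R g2 a0"
    by (simp only: scaleR_diff_right scaleR_scaleR)
  also have "\<dots> = DD x y - g1 x - ((y - x)/2) *\<^sub>R g2 a0"
    unfolding k1 k2 using False by (simp add: DD_def k_def)
  finally have eq: "DD x y - g1 x - ((y - x)/2) *\<^sub>R g2 a0 =
        k *\<^sub>R (\<gamma> y - \<gamma> x - (y - x) *\<^sub>R g1 x - ((y - x)^2/2) *\<^sub>R g2 a0)" by simp
  have nz: "\<bar>y - x\<bar> > 0" using False by simp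
  have "norm (DD x y - g1 x - ((y - x)/2) *\<^sub>R g2 a0) =
      norm (\<gamma> y - \<gamma> x - (y - x) *\<^sub>R g1 x - ((y - x)^2/2) *\<^sub>R g2 a0) / \<bar>y - x\<bar>"
  proof -
    have "\<bar>k\<bar> = 1 / \<bar>y - x\<bar>" by (simp add: k_def)
    then show ?thesis unfolding eq norm_scaleR by simp
  qed
  also have "\<dots> \<le> e * (y - x)^2 / \<bar>y - x\<bar>" using H x y by (intro divide_right_mono) auto
  also have "(y - x)^2 = \<bar>y - x\<bar> * \<bar>y - x\<bar>" by (simp add: power2_eq_square)
  also have "e * (\<bar>y - x\<bar> * \<bar>y - x\<bar>) / \<bar>y - x\<bar> = e * \<bar>y - x\<bar>" using nz by (intro cancelA) simp
  finally show ?thesis .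
qed

end

lemma get3:
  assumes "npts g P \<ge> 3"
  shows "\<exists>x y z. x \<in> hits g P \<and> y \<in> hits g P \<and> z \<in> hits g P \<and> x \<noteq> y \<and> y \<noteq> z \<and> x \<noteq> z"
proof -
  obtain T where T: "T \<subseteq> hits g P" "card T = 3"
  proof (cases "finite (hits g P)")
    case True
    then have "3 \<le> card (hits g P)" using assms by (simp add: npts_def numeral_eq_enat)
    then show ?thesis using that obtain_subset_with_card_n by metis
  next
    case False
    then show ?thesis using that infinite_arbitrarily_large by metis
  qed
  then obtain x y z where "T = {x,y,z}" "x \<noteq> y" "y \<noteq> z" "x \<noteq> z" unfolding card_3_iff by blast
  then show ?thesis using T by blast
qed

context curve begin

definition EE :: "real \<Rightarrow> real \<Rightarrow> real \<Rightarrow> real^3" where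
  "EE a b c = (if a = c then (1/2) *\<^sub>R g2 a else (1/(c - a)) *\<^sub>R (DD b c - DD a b))"

definition pa :: "real * (real * real) \<Rightarrow> real" where "pa q = fst q"
definition pb :: "real * (real * real) \<Rightarrow> real" where "pb q = fst q + snd (snd q) * fst (snd q)"
definition pc :: "real * (real * real) \<Rightarrow> real" where "pc q = fst q + fst (snd q)"
definition B3 :: "(real * (real * real)) set" where "B3 = {0..1} \<times> ({0..2/3} \<times> {0..1})"
definition FF where "FF q = cross3 (DD (pa q) (pb q)) (EE (pa q) (pb q) (pc q))"

lemma cont_p:
  "continuous (at q) pa" "continuous (at q) pb" "continuous (at q) pc"
  "continuous (at q) (\<lambda>q::real*(real*real). fst (snd q))"
proof -
  have c1: "continuous (at q) (\<lambda>q::real*(real*real). fst q)" by (rule continuous_fst[OF continuous_ident])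
  have cs: "continuous (at q) (\<lambda>q::real*(real*real). snd q)" by (rule continuous_snd[OF continuous_ident])
  have c2: "continuous (at q) (\<lambda>q::real*(real*real). fst (snd q))" by (rule continuous_fst[OF cs])
  have c3: "continuous (at q) (\<lambda>q::real*(real*real). snd (snd q))" by (rule continuous_snd[OF cs])
  show "continuous (at q) pa" unfolding pa_def[abs_def] by (rule c1)
  show "continuous (at q) pb" unfolding pb_def[abs_def] by (rule continuous_add[OF c1 continuous_mult[OF c3 c2]])
  show "continuous (at q) pc" unfolding pc_def[abs_def] by (rule continuous_add[OF c1 c2])
  show "continuous (at q) (\<lambda>q::real*(real*real). fst (snd q))" by (rule c2)
qed

lemma B3_mem: "q \<in> B3 \<longleftrightarrow> 0 \<le> fst q \<and> fst q \<le> 1 \<and> 0 \<le> fst (snd q) \<and> fst (snd q) \<le> 2/3 \<and> 0 \<le> snd (snd q) \<and> snd (snd q) \<le> 1"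
  by (cases q) (auto simp: B3_def)

lemma EE_cont: "continuous_on B3 (\<lambda>q. EE (pa q) (pb q) (pc q))"
  unfolding continuous_on_eq_continuous_within
proof (intro ballI)
  fix q0 assume q0: "q0 \<in> B3"
  define L0 where "L0 = fst (snd q0)"
  have L0: "L0 \<ge> 0" using q0 by (simp add: B3_mem L0_def)
  show "continuous (at q0 within B3) (\<lambda>q. EE (pa q) (pb q) (pc q))"
  proof (cases "L0 > 0")
    case True
    define f where "f q = (1/(pc q - pa q)) *\<^sub>R (DD (pb q) (pc q) - DD (pa q) (pb q))" for q
    have cd: "continuous (at q0) (\<lambda>q. pc q - pa q)" by (rule continuous_diff[OF cont_p(3) cont_p(1)])
    have ne: "pc q0 - pa q0 \<noteq> 0" using True by (simp add: pc_def pa_def L0_def)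
    have ci: "continuous (at q0) (\<lambda>q. 1 / (pc q - pa q))"
      using isCont_divide[OF continuous_const cd ne] by simp
    have cf: "continuous (at q0) f"
      unfolding f_def[abs_def]
      by (rule continuous_scaleR[OF ci continuous_diff[OF DD_cont_comp[OF cont_p(2) cont_p(3)] DD_cont_comp[OF cont_p(1) cont_p(2)]]])
    show ?thesis
    proof (rule continuous_transform_within[OF _ True q0])
      show "continuous (at q0 within B3) f" using cf continuous_at_imp_continuous_at_within by blast
      fix q assume "q \<in> B3" and d: "dist q q0 < L0"
      have "dist (fst (snd q)) (fst (snd q0)) \<le> dist q q0"
        using dist_fst_le[of "snd q" "snd q0"] dist_snd_le[of q q0] by linarith
      then have "fst (snd q) > 0" using d by (simp add: L0_def dist_real_def)
      then have "pa q \<noteq> pc q" by (simp add: pa_def pc_def)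
      then show "f q = EE (pa q) (pb q) (pc q)" by (simp add: f_def EE_def)
    qed
  next
    case False
    then have L00: "L0 = 0" using L0 by simp
    define a0 where "a0 = fst q0"
    have p0: "pa q0 = a0" "pb q0 = a0" "pc q0 = a0" using L00 by (simp_all add: pa_def pb_def pc_def a0_def L0_def)
    have E0: "EE (pa q0) (pb q0) (pc q0) = (1/2) *\<^sub>R g2 a0" using p0 by (simp add: EE_def)
    show ?thesis unfolding continuous_within_eps_delta
    proof (intro allI impI)
      fix e :: real assume e: "e > 0"
      then have e2: "e/2 > 0" by simp
      from taylor2[OF e2, of a0] obtain \<delta> where \<delta>: "\<delta> > 0" and H: "\<forall>x y. \<bar>x - a0\<bar> < \<delta> \<longrightarrow> \<bar>y - a0\<bar> < \<delta> \<longrightarrow>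
         norm (\<gamma> y - \<gamma> x - (y - x) *\<^sub>R g1 x - ((y - x)^2/2) *\<^sub>R g2 a0) \<le> e/2 * (y - x)^2
         \<and> norm (g2 x - g2 a0) \<le> e/2" by blast
      show "\<exists>d>0. \<forall>q\<in>B3. dist q q0 < d \<longrightarrow> dist (EE (pa q) (pb q) (pc q)) (EE (pa q0) (pb q0) (pc q0)) < e"
      proof (intro exI[of _ "\<delta>/3"] conjI ballI impI)
        show "\<delta>/3 > 0" using \<delta> by simp
        fix q assume q: "q \<in> B3" and d: "dist q q0 < \<delta>/3"
        define a where "a = pa q"
        define b where "b = pb q"
        define c where "c = pc q"
        define L where "L = fst (snd q)"
        define \<theta> where "\<theta> = snd (snd q)"
        have ranges: "0 \<le> L" "0 \<le> \<theta>" "\<theta> \<le> 1" using q by (simp_all add: B3_mem L_def \<theta>_def)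
        have bdef: "b = a + \<theta> * L" and cdef: "c = a + L" by (simp_all add: a_def b_def c_def pa_def pb_def pc_def L_def \<theta>_def)
        have da: "\<bar>a - a0\<bar> < \<delta>/3" using d dist_fst_le[of q q0] by (simp add: a_def a0_def pa_def dist_real_def)
        have "dist (fst (snd q)) (fst (snd q0)) \<le> dist q q0"
          using dist_fst_le[of "snd q" "snd q0"] dist_snd_le[of q q0] by linarith
        then have dL: "L < \<delta>/3" using d L00 ranges by (simp add: L_def L0_def dist_real_def)
        have tL: "\<theta> * L \<le> L" using ranges by (simp add: mult_left_le_one_le)
        have tL0: "0 \<le> \<theta> * L" using ranges by simp
        have ina: "\<bar>a - a0\<bar> < \<delta>" and inb: "\<bar>b - a0\<bar> < \<delta>" and inc: "\<bar>c - a0\<bar> < \<delta>"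
          using da dL tL tL0 \<delta> unfolding bdef cdef by linarith+
        show "dist (EE (pa q) (pb q) (pc q)) (EE (pa q0) (pb q0) (pc q0)) < e"
        proof (cases "L = 0")
          case True
          then have "EE a b c = (1/2) *\<^sub>R g2 a" by (simp add: EE_def cdef)
          moreover have "norm (g2 a - g2 a0) \<le> e/2" using H ina by blast
          ultimately have "dist (EE a b c) ((1/2) *\<^sub>R g2 a0) \<le> e/4"
            by (simp add: dist_norm scaleR_diff_right[symmetric])
          then show ?thesis using e E0 by (simp add: a_def b_def c_def)
        next
          case False
          then have Lp: "L > 0" using ranges by simp
          define c0 where "c0 = g2 a0"
          define e1 where "e1 = DD b c - g1 b - ((c - b)/2) *\<^sub>R c0"
          define e2 where "e2 = DD b a - g1 b - ((a - b)/2) *\<^sub>R c0"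
          have ne1: "norm e1 \<le> e/2 * \<bar>c - b\<bar>" unfolding e1_def c0_def by (rule DD2[OF H inb inc])
          have ne2: "norm e2 \<le> e/2 * \<bar>a - b\<bar>" unfolding e2_def c0_def by (rule DD2[OF H inb ina])
          have cb: "\<bar>c - b\<bar> = (1 - \<theta>) * L" using ranges tL unfolding bdef cdef by (simp add: algebra_simps)
          have ab: "\<bar>a - b\<bar> = \<theta> * L" using ranges unfolding bdef by simp
          have ac: "a \<noteq> c" using Lp cdef by simp
          have ar: "(c - b)/2 - (a - b)/2 = (c - a)/2" by (simp add: field_simps)
          have sc: "((c - b)/2) *\<^sub>R c0 - ((a - b)/2) *\<^sub>R c0 = ((c - a)/2) *\<^sub>R c0"
            unfolding ar[symmetric] by (simp only: scaleR_left_diff_distrib)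
          have "DD b c - DD a b = (e1 + g1 b + ((c - b)/2) *\<^sub>R c0) - (e2 + g1 b + ((a - b)/2) *\<^sub>R c0)"
            by (simp add: e1_def e2_def DD_sym[of a b])
          also have "\<dots> = (((c - b)/2) *\<^sub>R c0 - ((a - b)/2) *\<^sub>R c0) + (e1 - e2)" by simp
          finally have diff: "DD b c - DD a b = ((c - a)/2) *\<^sub>R c0 + (e1 - e2)" unfolding sc .
          have "EE a b c = (1/L) *\<^sub>R (DD b c - DD a b)" using ac by (simp add: EE_def cdef)
          also have "\<dots> = (1/L * ((c - a)/2)) *\<^sub>R c0 + (1/L) *\<^sub>R (e1 - e2)"
            unfolding diff by (simp add: scaleR_add_right)
          also have "1/L * ((c - a)/2) = 1/2" using Lp cdef by simp
          finally have EEeq: "EE a b c - (1/2) *\<^sub>R c0 = (1/L) *\<^sub>R (e1 - e2)" by simp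
          have "norm (EE a b c - (1/2) *\<^sub>R c0) = (1/L) * norm (e1 - e2)" using Lp unfolding EEeq by simp
          also have "\<dots> \<le> (1/L) * (norm e1 + norm e2)"
            using Lp by (intro mult_left_mono norm_triangle_ineq4) auto
          also have "\<dots> \<le> (1/L) * (e/2 * ((1 - \<theta>) * L) + e/2 * (\<theta> * L))"
            using ne1 ne2 Lp unfolding cb ab by (intro mult_left_mono add_mono) auto
          also have "\<dots> = e/2" using Lp by (simp add: field_simps)
          finally have "norm (EE a b c - (1/2) *\<^sub>R c0) \<le> e/2" .
          then show ?thesis using e E0 by (simp add: a_def b_def c_def c0_def dist_norm)
        qed
      qed
    qed
  qed
qed

lemma FF_cont: "continuous_on B3 FF"
proof -
  have "continuous_on B3 (\<lambda>q. DD (pa q) (pb q))"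
    by (intro continuous_at_imp_continuous_on ballI DD_cont_comp cont_p)
  from continuous_on_cross[OF this EE_cont] show ?thesis by (simp add: FF_def[abs_def])
qed

lemma FF_Lpos:
  assumes "pa q \<noteq> pc q"
  shows "FF q = (1 / (pc q - pa q)) *\<^sub>R cross3 (DD (pa q) (pb q)) (DD (pb q) (pc q))"
proof -
  have "FF q = cross3 (DD (pa q) (pb q)) ((1 / (pc q - pa q)) *\<^sub>R (DD (pb q) (pc q) - DD (pa q) (pb q)))"
    using assms by (simp add: FF_def EE_def)
  then show ?thesis by (simp add: cross_sub_self)
qed

lemma FF_generic:
  assumes "pa q < pb q" "pb q < pc q"
  shows "FF q = (1 / (pc q - pa q) * (1 / (pb q - pa q) * (1 / (pc q - pb q)))) *\<^sub>R
                  cross3 (\<gamma> (pb q) - \<gamma> (pa q)) (\<gamma> (pc q) - \<gamma> (pb q))"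
  using assms by (simp add: FF_Lpos DD_def cross_mult_left cross_mult_right)

lemma FF_nz:
  assumes G1: "Gamma1 \<gamma>" and G4: "\<And>t. xyn (g1 t) \<noteq> 0" and G5: "Gamma5 \<gamma> \<Delta>5" and q: "q \<in> B3"
  shows "FF q $ 3 \<noteq> 0"
proof -
  define a where "a = pa q"
  define b where "b = pb q"
  define c where "c = pc q"
  define L where "L = fst (snd q)"
  define \<theta> where "\<theta> = snd (snd q)"
  have ranges: "0 \<le> L" "L \<le> 2/3" "0 \<le> \<theta>" "\<theta> \<le> 1" using q by (simp_all add: B3_mem L_def \<theta>_def)
  have bdef: "b = a + \<theta> * L" and cdef: "c = a + L" by (simp_all add: a_def b_def c_def pa_def pb_def pc_def L_def \<theta>_def)
  show ?thesis
  proof (cases "L = 0")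
    case True
    then have "a = b" "a = c" by (simp_all add: bdef cdef)
    then have "FF q = (1/2) *\<^sub>R cross3 (g1 a) (g2 a)"
      by (simp add: FF_def EE_def DD_def a_def[symmetric] b_def[symmetric] c_def[symmetric] cross_mult_right)
    then show ?thesis using osc[OF G5, of a] by simp
  next
    case False
    then have Lp: "L > 0" using ranges by simp
    have LnI1: "L \<notin> \<int>" by (rule notInts) (use Lp ranges in auto)
    have LnI2: "- L \<notin> \<int>" by (rule notInts') (use Lp ranges in auto)
    note LnI = LnI1 LnI2
    have ac: "a \<noteq> c" using Lp cdef by simp
    have FL: "FF q = (1/L) *\<^sub>R cross3 (DD a b) (DD b c)"
      using FF_Lpos[of q] ac by (simp add: a_def[symmetric] b_def[symmetric] c_def[symmetric] cdef)
    show ?thesis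
    proof (cases "\<theta> = 0")
      case True
      then have ba: "b = a" by (simp add: bdef)
      have "cross3 (DD a b) (DD b c) = (1/L) *\<^sub>R cross3 (g1 a) (\<gamma> c - \<gamma> a)"
        using ba ac by (simp add: DD_def cdef cross_mult_right)
      moreover have "(cross3 (g1 a) (\<gamma> c - \<gamma> a))$3 \<noteq> 0"
        by (rule tang[OF G1 G4]) (simp add: cdef LnI)
      ultimately show ?thesis using FL Lp by simp
    next
      case t0: False
      show ?thesis
      proof (cases "\<theta> = 1")
        case True
        then have bc: "b = c" by (simp add: bdef cdef)
        have "cross3 (DD a b) (DD b c) = (1/L) *\<^sub>R cross3 (\<gamma> c - \<gamma> a) (g1 c)"
          using bc ac by (simp add: DD_def cdef cross_mult_left)
        moreover have "(cross3 (\<gamma> c - \<gamma> a) (g1 c))$3 = (cross3 (g1 c) (\<gamma> a - \<gamma> c))$3"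
          by (simp add: cross_components algebra_simps)
        moreover have "(cross3 (g1 c) (\<gamma> a - \<gamma> c))$3 \<noteq> 0"
          by (rule tang[OF G1 G4]) (simp add: cdef LnI)
        ultimately show ?thesis using FL Lp by simp
      next
        case False
        then have t: "0 < \<theta>" "\<theta> < 1" using t0 ranges by auto
        have o: "a < b" "b < c" using t Lp by (simp_all add: bdef cdef mult_strict_right_mono)
        have "FF q = (1 / (c - a) * (1 / (b - a) * (1 / (c - b)))) *\<^sub>R cross3 (\<gamma> b - \<gamma> a) (\<gamma> c - \<gamma> b)"
          using FF_generic[of q] o by (simp add: a_def b_def c_def)
        moreover have "(cross3 (\<gamma> b - \<gamma> a) (\<gamma> c - \<gamma> b))$3 \<noteq> 0"
          by (rule noncol[OF G1 o]) (use Lp ranges cdef in simp)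
        ultimately show ?thesis using o by simp
      qed
    qed
  qed
qed

end

context curve begin

lemma arr_sorted:
  assumes o: "0 \<le> x" "x < y" "y < z" "z < 1" and S: "\<gamma> x \<in> S" "\<gamma> y \<in> S" "\<gamma> z \<in> S"
  shows "\<exists>a b c. 0 \<le> a \<and> a \<le> 1 \<and> a < b \<and> b < c \<and> c - a \<le> 2/3 \<and> \<gamma> a \<in> S \<and> \<gamma> b \<in> S \<and> \<gamma> c \<in> S"
proof (cases "z - x \<le> 2/3")
  case True
  then show ?thesis using o S by (intro exI[of _ x] exI[of _ y] exI[of _ z]) auto
next
  case F1: False
  have x1: "\<gamma> (x + 1) \<in> S" "\<gamma> (y + 1) \<in> S" using S per by auto
  show ?thesis
  proof (cases "y - x \<ge> 1/3")
    case True
    then show ?thesis using o S x1 by (intro exI[of _ y] exI[of _ z] exI[of _ "x + 1"]) auto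
  next
    case False
    then show ?thesis using o S x1 F1 by (intro exI[of _ z] exI[of _ "x + 1"] exI[of _ "y + 1"]) auto
  qed
qed

lemma arr_any:
  assumes d: "x \<noteq> y" "y \<noteq> z" "x \<noteq> z" and r: "x \<in> {0..<1}" "y \<in> {0..<1}" "z \<in> {0..<1}"
    and S: "\<gamma> x \<in> S" "\<gamma> y \<in> S" "\<gamma> z \<in> S"
  shows "\<exists>a b c. 0 \<le> a \<and> a \<le> 1 \<and> a < b \<and> b < c \<and> c - a \<le> 2/3 \<and> \<gamma> a \<in> S \<and> \<gamma> b \<in> S \<and> \<gamma> c \<in> S"
proof (cases "x < y")
  case xy: True
  show ?thesis
  proof (cases "y < z")
    case True then show ?thesis using arr_sorted[of x y z S] xy r S by auto
  next
    case False
    then have zy: "z < y" using d by simp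
    show ?thesis
    proof (cases "x < z")
      case True then show ?thesis using arr_sorted[of x z y S] zy r S by auto
    next
      case False then have "z < x" using d by simp
      then show ?thesis using arr_sorted[of z x y S] xy r S by auto
    qed
  qed
next
  case False
  then have yx: "y < x" using d by simp
  show ?thesis
  proof (cases "x < z")
    case True then show ?thesis using arr_sorted[of y x z S] yx r S by auto
  next
    case False
    then have zx: "z < x" using d by simp
    show ?thesis
    proof (cases "y < z")
      case True then show ?thesis using arr_sorted[of y z x S] zx r S by auto
    next
      case False then have "z < y" using d by simp
      then show ?thesis using arr_sorted[of z y x S] yx r S by auto
    qed
  qed
qed

lemma Gd:
  assumes G1: "Gamma1 \<gamma>" and G5: "Gamma5 \<gamma> \<Delta>5" and G3: "Gamma3 \<gamma> \<Delta>3" and D3: "\<Delta>3 \<ge> 0"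
  shows "\<exists>\<Delta>\<ge>0. Gamma2 \<gamma> \<Delta>"
proof -
  have G4: "xyn (g1 t) \<noteq> 0" for t
  proof -
    have "Gamma4 \<gamma> \<Delta>3" by (rule G3_G4[OF G3 D3])
    then have "line_slope (g1 t) \<le> ereal \<Delta>3" by (simp add: Gamma4_def g1_def)
    then show ?thesis by (simp add: line_slope_le)
  qed
  have nz: "FF q $ 3 \<noteq> 0" if "q \<in> B3" for q by (rule FF_nz[OF G1 G4 G5 that])
  define \<rho> where "\<rho> q = xyn (FF q) / \<bar>FF q $ 3\<bar>" for q
  have c3: "continuous_on B3 (\<lambda>q. \<bar>FF q $ 3\<bar>)"
    by (rule continuous_on_rabs[OF continuous_on_component[OF FF_cont]])
  have cx: "continuous_on B3 (\<lambda>q. xyn (FF q))"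
    unfolding xyn_def by (intro continuous_intros FF_cont)
  have "continuous_on B3 \<rho>"
    unfolding \<rho>_def using continuous_on_divide[OF cx c3] nz by simp
  moreover have "compact B3" unfolding B3_def by (intro compact_Times compact_Icc)
  ultimately have "compact (\<rho> ` B3)" by (rule compact_continuous_image)
  then have "bounded (\<rho> ` B3)" by (rule compact_imp_bounded)
  then obtain M where M: "\<And>x. x \<in> \<rho> ` B3 \<Longrightarrow> \<bar>x\<bar> \<le> M"
    unfolding bounded_real by blast
  define D0 where "D0 = max M 0"
  have D0: "D0 \<ge> 0" by (simp add: D0_def)
  have "Gamma2 \<gamma> D0" unfolding Gamma2_def
  proof (intro allI impI)
    fix n c0 assume nn: "n \<noteq> 0" and np: "npts \<gamma> (plane n c0) \<ge> 3"
    obtain x y z where xyz: "x \<in> hits \<gamma> (plane n c0)" "y \<in> hits \<gamma> (plane n c0)" "z \<in> hits \<gamma> (plane n c0)"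
      "x \<noteq> y" "y \<noteq> z" "x \<noteq> z" using get3[OF np] by blast
    then have r: "x \<in> {0..<1}" "y \<in> {0..<1}" "z \<in> {0..<1}"
      and S: "\<gamma> x \<in> plane n c0" "\<gamma> y \<in> plane n c0" "\<gamma> z \<in> plane n c0"
      by (auto simp: hits_def)
    obtain a b c where abc: "0 \<le> a" "a \<le> 1" "a < b" "b < c" "c - a \<le> 2/3"
      and Sa: "\<gamma> a \<in> plane n c0" "\<gamma> b \<in> plane n c0" "\<gamma> c \<in> plane n c0"
      using arr_any[OF xyz(4-6) r S] by blast
    define q where "q = (a, (c - a, (b - a)/(c - a)))"
    have cap: "c - a > 0" using abc by simp
    have th: "0 \<le> (b - a)/(c - a)" "(b - a)/(c - a) \<le> 1" using abc cap by auto
    have qB: "q \<in> B3" using abc th by (simp add: B3_mem q_def)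
    have pq: "pa q = a" "pb q = b" "pc q = c" using cap by (simp_all add: q_def pa_def pb_def pc_def)
    define m where "m = cross3 (\<gamma> b - \<gamma> a) (\<gamma> c - \<gamma> b)"
    define k where "k = 1 / (c - a) * (1 / (b - a) * (1 / (c - b)))"
    have k: "k > 0" using abc by (simp add: k_def)
    have FFq: "FF q = k *\<^sub>R m" using FF_generic[of q] abc by (simp add: pq k_def m_def)
    have "\<rho> q \<le> D0" using M[of "\<rho> q"] qB by (auto simp: D0_def)
    moreover have "\<bar>FF q $ 3\<bar> > 0" using nz[OF qB] by simp
    ultimately have "xyn (FF q) \<le> D0 * \<bar>FF q $ 3\<bar>" by (simp add: \<rho>_def divide_le_eq)
    then have "k * xyn m \<le> k * (D0 * \<bar>m $ 3\<bar>)" using k by (simp add: FFq xyn_scale abs_mult algebra_simps)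
    then have mb: "xyn m \<le> D0 * \<bar>m $ 3\<bar>" using k by simp
    have m3: "m $ 3 \<noteq> 0" unfolding m_def by (rule noncol[OF G1]) (use abc in auto)
    have "n \<bullet> (\<gamma> b - \<gamma> a) = 0" "n \<bullet> (\<gamma> c - \<gamma> b) = 0"
      using Sa by (simp_all add: plane_def inner_diff_right)
    from normal_parallel[OF this m3[unfolded m_def] mb[unfolded m_def] nn]
    show "plane_slope n \<le> ereal D0" by (simp add: plane_slope_le)
  qed
  then show ?thesis using D0 by blast
qed

end

theorem mainTheorem9:
  fixes \<gamma> :: "real \<Rightarrow> real^3"
  assumes "smooth_immersed_closed_curve \<gamma>"
  shows "(Gamma1 \<gamma> \<longleftrightarrow> Gamma1' \<gamma>)
       \<and> ((\<exists>\<Delta>\<ge>0. Gamma4 \<gamma> \<Delta>) \<longleftrightarrow> Gamma4' \<gamma>)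
       \<and> (\<forall>\<Delta>\<ge>0. Gamma2 \<gamma> \<Delta> \<longrightarrow> Gamma3 \<gamma> \<Delta>)
       \<and> (\<forall>\<Delta>\<ge>0. Gamma3 \<gamma> \<Delta> \<longrightarrow> Gamma4 \<gamma> \<Delta>)
       \<and> (Gamma1 \<gamma> \<longrightarrow> (\<exists>\<Delta>\<ge>0. Gamma4 \<gamma> \<Delta>) \<longrightarrow> (\<exists>\<Delta>\<ge>0. Gamma3 \<gamma> \<Delta>))
       \<and> (Gamma1 \<gamma> \<longrightarrow> (\<exists>\<Delta>\<ge>0. Gamma5 \<gamma> \<Delta>) \<longrightarrow>
            (\<exists>\<Delta>\<ge>0. Gamma3 \<gamma> \<Delta>) \<longrightarrow> (\<exists>\<Delta>\<ge>0. Gamma2 \<gamma> \<Delta>))"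
proof -
  interpret curve \<gamma> by (rule curve.intro) (rule assms)
  have p5: "Gamma1 \<gamma> \<longrightarrow> (\<exists>\<Delta>\<ge>0. Gamma4 \<gamma> \<Delta>) \<longrightarrow> (\<exists>\<Delta>\<ge>0. Gamma3 \<gamma> \<Delta>)"
    using G1_G4_G3 by blast
  have p6: "Gamma1 \<gamma> \<longrightarrow> (\<exists>\<Delta>\<ge>0. Gamma5 \<gamma> \<Delta>) \<longrightarrow>
            (\<exists>\<Delta>\<ge>0. Gamma3 \<gamma> \<Delta>) \<longrightarrow> (\<exists>\<Delta>\<ge>0. Gamma2 \<gamma> \<Delta>)"
    using Gd by blast
  show ?thesis using G1_iff G4_iff G2_G3 G3_G4 p5 p6 by blast
qed

end
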